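(* For every $k\ge1$ and every $z\in\mathbb{C}P^k\setminus\mathbb{R}P^k$, $$E_{\mathbb{C}P^k}(z)=\log\left(\frac{k+1}{4}\right)+\int_0^\infty e^{-\rho}\log\rho\,d\rho+\log\left(1+\sqrt{1-\|\tau\|^2(z)}\right).$$
   Context: Equip $\mathcal O_{\mathbb{C}P^k}(1)$ with its standard Hermitian metric, so a linear form $\sigma$ has norm $\|\sigma(z)\|=|\sigma(z)|/|z|$, and $\mathcal O(2)$ with the induced metric. The space $\mathbb{R}H^0(\mathbb{C}P^k,\mathcal O(1))$ of real linear forms carries the Euclidean structure with orthonormal basis $\sigma_i(z)=\sqrt{k+1}\,z_i$, $i=0,\dots,k$, and $\mu$ is its Gaussian measure (coefficients $a\in\mathbb{R}^{k+1}$ of $\sum a_i\sigma_i$ have density $\pi^{-(k+1)/2}e^{-|a|^2}$). Define $E_{\mathbb{C}P^k}(z)=\int\log\|\sigma(z)\|^2\,d\mu(\sigma)$. $\tau$ is the section of $\mathcal O(2)$ given by $z_0^2+\dots+z_k^2$, so $\|\tau\|(z)=|z_0^2+\dots+z_k^2|/|z|^2$. *)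

theory Defs
  imports "HOL-Analysis.Analysis"
begin

text \<open>Points of CP^k are represented by nonzero vectors z in C^(k+1), indexed by a
finite type 'n with CARD('n) = k+1.  All quantities below are invariant under
rescaling z, so they are well defined on CP^k.\<close>

definition in_RP :: "complex ^ 'n \<Rightarrow> bool" where
  "in_RP z \<longleftrightarrow> (\<exists>c::complex. \<exists>x::real ^ 'n. z = c *s (\<chi> i. complex_of_real (x $ i)))"

text \<open>Real linear form with coefficients a in the orthonormal basis
sigma_i = sqrt(k+1) z_i, evaluated at z (as a polynomial).\<close>
definition real_section :: "real ^ 'n \<Rightarrow> complex ^ 'n \<Rightarrow> complex" where
  "real_section a z = (\<Sum>i\<in>UNIV. complex_of_real (a $ i * sqrt (real CARD('n))) * z $ i)"

text \<open>Pointwise squared Fubini-Study norm ||sigma(z)||^2 = |sigma(z)|^2/|z|^2.\<close>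
definition section_norm_sq :: "real ^ 'n \<Rightarrow> complex ^ 'n \<Rightarrow> real" where
  "section_norm_sq a z = (cmod (real_section a z))\<^sup>2 / (norm z)\<^sup>2"

definition gauss_measure :: "(real ^ 'n) measure" where
  "gauss_measure = density lborel
     (\<lambda>a. ennreal (pi powr (- real CARD('n) / 2) * exp (- (norm a)\<^sup>2)))"

definition E_CP :: "complex ^ 'n \<Rightarrow> real" where
  "E_CP z = (\<integral>a. ln (section_norm_sq a z) \<partial>(gauss_measure :: (real ^ 'n) measure))"

definition tau_norm :: "complex ^ 'n \<Rightarrow> real" where
  "tau_norm z = cmod (\<Sum>i\<in>UNIV. (z $ i)\<^sup>2) / (norm z)\<^sup>2"

end

theory Submission
  imports Defs "HOL-Probability.Probability"
begin


definition gd :: "real \<Rightarrow> real" where "gd x = exp (- x\<^sup>2) / sqrt pi"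

lemma gd_normal: "gd = normal_density 0 (sqrt (1/2))"
  by (auto simp: fun_eq_iff gd_def normal_density_def real_sqrt_divide power_divide)

lemma gd_nonneg[simp]: "0 \<le> gd x" by (simp add: gd_def)
lemma gd_measurable[measurable]: "gd \<in> borel_measurable borel" unfolding gd_def by measurable

definition NN :: "real measure" where "NN = density lborel (\<lambda>x. ennreal (gd x))"

lemma prob_NN: "prob_space NN"
  unfolding NN_def gd_normal by (rule prob_space_normal_density) simp

lemma sets_NN[simp, measurable_cong]: "sets NN = sets borel" by (simp add: NN_def)
lemma space_NN[simp]: "space NN = UNIV" by (simp add: NN_def)

interpretation NN: prob_space NN by (rule prob_NN)
interpretation NN2: pair_prob_space NN NN ..

lemma emeasure_NN_UNIV[simp]: "emeasure NN UNIV = 1"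
  using NN.emeasure_space_1 by simp

lemma lborel2_meas:
  "K \<in> borel_measurable borel \<Longrightarrow> K \<in> borel_measurable (lborel \<Otimes>\<^sub>M lborel :: (real \<times> real) measure)"
  by (simp add: lborel_prod)

lemma pl_snd: fixes f :: "real \<times> real \<Rightarrow> ennreal"
  assumes [measurable]: "f \<in> borel_measurable (lborel \<Otimes>\<^sub>M lborel)"
  shows "(\<integral>\<^sup>+p. f p \<partial>(lborel \<Otimes>\<^sub>M lborel)) = (\<integral>\<^sup>+y. \<integral>\<^sup>+x. f (x,y) \<partial>lborel \<partial>lborel)"
  by (rule lborel_pair.nn_integral_snd[symmetric]) measurable

lemma pl_fst: fixes f :: "real \<times> real \<Rightarrow> ennreal"
  assumes [measurable]: "f \<in> borel_measurable (lborel \<Otimes>\<^sub>M lborel)"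
  shows "(\<integral>\<^sup>+p. f p \<partial>(lborel \<Otimes>\<^sub>M lborel)) = (\<integral>\<^sup>+x. \<integral>\<^sup>+y. f (x,y) \<partial>lborel \<partial>lborel)"
  by (rule lborel.nn_integral_fst[symmetric]) measurable

lemma shear1:
  fixes K :: "real \<times> real \<Rightarrow> ennreal"
  assumes K: "K \<in> borel_measurable (lborel \<Otimes>\<^sub>M lborel)"
  notes K[measurable]
  shows "(\<integral>\<^sup>+p. K (fst p + a * snd p, snd p) \<partial>(lborel \<Otimes>\<^sub>M lborel)) = (\<integral>\<^sup>+p. K p \<partial>(lborel \<Otimes>\<^sub>M lborel))"
proof -
  have "(\<integral>\<^sup>+p. K (fst p + a * snd p, snd p) \<partial>(lborel \<Otimes>\<^sub>M lborel))
      = (\<integral>\<^sup>+y. \<integral>\<^sup>+x. K (x + a * y, y) \<partial>lborel \<partial>lborel)"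
    by (subst pl_snd) measurable
  also have "\<dots> = (\<integral>\<^sup>+y. \<integral>\<^sup>+x. K (x, y) \<partial>lborel \<partial>lborel)"
  proof (rule nn_integral_cong)
    fix y
    show "(\<integral>\<^sup>+x. K (x + a * y, y) \<partial>lborel) = (\<integral>\<^sup>+x. K (x, y) \<partial>lborel)"
      using nn_integral_real_affine[of "\<lambda>x. K (x, y)" 1 "a*y"] by (simp add: add.commute)
  qed
  also have "\<dots> = (\<integral>\<^sup>+p. K p \<partial>(lborel \<Otimes>\<^sub>M lborel))"
    by (subst pl_snd) measurable
  finally show ?thesis .
qed

lemma shear2:
  fixes K :: "real \<times> real \<Rightarrow> ennreal"
  assumes K: "K \<in> borel_measurable (lborel \<Otimes>\<^sub>M lborel)"
  notes K[measurable]
  shows "(\<integral>\<^sup>+p. K (fst p, snd p + a * fst p) \<partial>(lborel \<Otimes>\<^sub>M lborel)) = (\<integral>\<^sup>+p. K p \<partial>(lborel \<Otimes>\<^sub>M lborel))"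
proof -
  have "(\<integral>\<^sup>+p. K (fst p, snd p + a * fst p) \<partial>(lborel \<Otimes>\<^sub>M lborel))
      = (\<integral>\<^sup>+x. \<integral>\<^sup>+y. K (x, y + a * x) \<partial>lborel \<partial>lborel)"
    by (subst pl_fst) measurable
  also have "\<dots> = (\<integral>\<^sup>+x. \<integral>\<^sup>+y. K (x, y) \<partial>lborel \<partial>lborel)"
  proof (rule nn_integral_cong)
    fix x
    show "(\<integral>\<^sup>+y. K (x, y + a * x) \<partial>lborel) = (\<integral>\<^sup>+y. K (x, y) \<partial>lborel)"
      using nn_integral_real_affine[of "\<lambda>y. K (x, y)" 1 "a*x"] by (simp add: add.commute)
  qed
  also have "\<dots> = (\<integral>\<^sup>+p. K p \<partial>(lborel \<Otimes>\<^sub>M lborel))"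
    by (subst pl_fst) measurable
  finally show ?thesis .
qed

lemma scale2:
  fixes K :: "real \<times> real \<Rightarrow> ennreal"
  assumes K: "K \<in> borel_measurable (lborel \<Otimes>\<^sub>M lborel)" and c: "c \<noteq> 0"
  notes K[measurable]
  shows "(\<integral>\<^sup>+p. K (c * fst p, snd p / c) \<partial>(lborel \<Otimes>\<^sub>M lborel)) = (\<integral>\<^sup>+p. K p \<partial>(lborel \<Otimes>\<^sub>M lborel))"
proof -
  have "(\<integral>\<^sup>+p. K (c * fst p, snd p / c) \<partial>(lborel \<Otimes>\<^sub>M lborel))
      = (\<integral>\<^sup>+x. \<integral>\<^sup>+y. K (c * x, y / c) \<partial>lborel \<partial>lborel)"
    by (subst pl_fst) measurable
  also have "\<dots> = (\<integral>\<^sup>+x. \<bar>c\<bar> * \<integral>\<^sup>+y. K (c * x, y) \<partial>lborel \<partial>lborel)"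
  proof (rule nn_integral_cong)
    fix x
    show "(\<integral>\<^sup>+y. K (c * x, y / c) \<partial>lborel) = \<bar>c\<bar> * (\<integral>\<^sup>+y. K (c * x, y) \<partial>lborel)"
      using nn_integral_real_affine[of "\<lambda>y. K (c * x, y / c)" c 0] c by simp
  qed
  also have "\<dots> = \<bar>c\<bar> * (\<integral>\<^sup>+x. \<integral>\<^sup>+y. K (c * x, y) \<partial>lborel \<partial>lborel)"
    by (rule nn_integral_cmult) measurable
  also have "\<dots> = \<bar>c\<bar> * (\<integral>\<^sup>+y. \<integral>\<^sup>+x. K (c * x, y) \<partial>lborel \<partial>lborel)"
    by (subst lborel_pair.Fubini') auto
  also have "\<dots> = (\<integral>\<^sup>+y. \<bar>c\<bar> * \<integral>\<^sup>+x. K (c * x, y) \<partial>lborel \<partial>lborel)"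
    by (rule nn_integral_cmult[symmetric]) measurable
  also have "\<dots> = (\<integral>\<^sup>+y. \<integral>\<^sup>+x. K (x, y) \<partial>lborel \<partial>lborel)"
  proof (rule nn_integral_cong)
    fix y
    show "\<bar>c\<bar> * (\<integral>\<^sup>+x. K (c * x, y) \<partial>lborel) = (\<integral>\<^sup>+x. K (x, y) \<partial>lborel)"
      using nn_integral_real_affine[of "\<lambda>x. K (x, y)" c 0] c by simp
  qed
  also have "\<dots> = (\<integral>\<^sup>+p. K p \<partial>(lborel \<Otimes>\<^sub>M lborel))"
    by (subst pl_snd) measurable
  finally show ?thesis .
qed

definition rot :: "real \<Rightarrow> real \<Rightarrow> real \<times> real \<Rightarrow> real \<times> real" where
  "rot c d p = (c * fst p - d * snd p, d * fst p + c * snd p)"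

lemma rot_measurable[measurable]: "rot c d \<in> (lborel \<Otimes>\<^sub>M lborel) \<rightarrow>\<^sub>M (lborel \<Otimes>\<^sub>M lborel)"
  unfolding rot_def by measurable

lemma leb_rot0:
  fixes K :: "real \<times> real \<Rightarrow> ennreal"
  assumes K[measurable]: "K \<in> borel_measurable (lborel \<Otimes>\<^sub>M lborel)" and cd: "c\<^sup>2 + d\<^sup>2 = 1" and c: "c \<noteq> 0"
  shows "(\<integral>\<^sup>+p. K (rot c d p) \<partial>(lborel \<Otimes>\<^sub>M lborel)) = (\<integral>\<^sup>+p. K p \<partial>(lborel \<Otimes>\<^sub>M lborel))"
proof -
  define K1 where "K1 = (\<lambda>q. K (fst q, snd q + (d/c) * fst q))"
  define K2 where "K2 = (\<lambda>q. K1 (c * fst q, snd q / c))"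
  have [measurable]: "K1 \<in> borel_measurable (lborel \<Otimes>\<^sub>M lborel)" unfolding K1_def by measurable
  have [measurable]: "K2 \<in> borel_measurable (lborel \<Otimes>\<^sub>M lborel)" unfolding K2_def by measurable
  have eq: "K (rot c d p) = K2 (fst p + (- d / c) * snd p, snd p)" for p
  proof -
    have "c * (fst p + - d / c * snd p) = c * fst p - d * snd p" using c by (simp add: field_simps)
    moreover have "snd p / c + d / c * (c * (fst p + - d / c * snd p)) = d * fst p + c * snd p"
    proof -
      have e: "c*(c*(c*t)) + c*(d*(d*t)) = (c*c+d*d)*(c*t)" for t by (simp add: algebra_simps)
      show ?thesis using c cd e[of "snd p"] by (simp add: field_simps power2_eq_square del: mult_cancel_left)
    qed
    ultimately show ?thesis unfolding K2_def K1_def rot_def by simp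
  qed
  have "(\<integral>\<^sup>+p. K (rot c d p) \<partial>(lborel \<Otimes>\<^sub>M lborel)) = (\<integral>\<^sup>+p. K2 (fst p + (- d / c) * snd p, snd p) \<partial>(lborel \<Otimes>\<^sub>M lborel))"
    by (simp add: eq)
  also have "\<dots> = (\<integral>\<^sup>+p. K2 p \<partial>(lborel \<Otimes>\<^sub>M lborel))" by (rule shear1) measurable
  also have "\<dots> = (\<integral>\<^sup>+p. K1 p \<partial>(lborel \<Otimes>\<^sub>M lborel))" unfolding K2_def by (rule scale2) (use c in auto)
  also have "\<dots> = (\<integral>\<^sup>+p. K p \<partial>(lborel \<Otimes>\<^sub>M lborel))" unfolding K1_def by (rule shear2) measurable
  finally show ?thesis .
qed

lemma rot_rot: "rot c d (rot c d p) = rot (c\<^sup>2 - d\<^sup>2) (2 * c * d) p"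
  by (simp add: rot_def algebra_simps power2_eq_square)

lemma leb_rot:
  fixes K :: "real \<times> real \<Rightarrow> ennreal"
  assumes K[measurable]: "K \<in> borel_measurable (lborel \<Otimes>\<^sub>M lborel)" and cd: "c\<^sup>2 + d\<^sup>2 = 1"
  shows "(\<integral>\<^sup>+p. K (rot c d p) \<partial>(lborel \<Otimes>\<^sub>M lborel)) = (\<integral>\<^sup>+p. K p \<partial>(lborel \<Otimes>\<^sub>M lborel))"
proof (cases "c = 0")
  case False then show ?thesis using leb_rot0[OF K cd] by simp
next
  case True
  then have d2: "d\<^sup>2 = 1" using cd by simp
  define c1 where "c1 = 1 / sqrt 2"
  define d1 where "d1 = d / sqrt 2"
  have c1: "c1 \<noteq> 0" and cd1: "c1\<^sup>2 + d1\<^sup>2 = 1" using d2 by (auto simp: c1_def d1_def power_divide)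
  have r: "rot c d p = rot c1 d1 (rot c1 d1 p)" for p
    unfolding rot_rot using d2 True by (simp add: c1_def d1_def power_divide)
  have "(\<integral>\<^sup>+p. K (rot c d p) \<partial>(lborel \<Otimes>\<^sub>M lborel)) = (\<integral>\<^sup>+p. (\<lambda>q. K (rot c1 d1 q)) (rot c1 d1 p) \<partial>(lborel \<Otimes>\<^sub>M lborel))"
    by (simp add: r)
  also have "\<dots> = (\<integral>\<^sup>+p. K (rot c1 d1 p) \<partial>(lborel \<Otimes>\<^sub>M lborel))"
    by (rule leb_rot0[OF _ cd1 c1]) measurable
  also have "\<dots> = (\<integral>\<^sup>+p. K p \<partial>(lborel \<Otimes>\<^sub>M lborel))"
    by (rule leb_rot0[OF K cd1 c1])
  finally show ?thesis .
qed

lemma sets_NN2[measurable_cong]: "sets (NN \<Otimes>\<^sub>M NN) = sets (lborel \<Otimes>\<^sub>M lborel)"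
  by (rule sets_pair_measure_cong) auto

lemma NN2_density: "NN \<Otimes>\<^sub>M NN = density (lborel \<Otimes>\<^sub>M lborel) (\<lambda>p. ennreal (gd (fst p) * gd (snd p)))"
proof -
  have "NN \<Otimes>\<^sub>M NN = density (lborel \<Otimes>\<^sub>M lborel) (\<lambda>(x,y). ennreal (gd x) * ennreal (gd y))"
    unfolding NN_def
    by (rule pair_measure_density) (auto intro: lborel.sigma_finite_measure_axioms prob_space_imp_sigma_finite prob_NN[unfolded NN_def])
  also have "\<dots> = density (lborel \<Otimes>\<^sub>M lborel) (\<lambda>p. ennreal (gd (fst p) * gd (snd p)))"
    by (rule density_cong) (auto simp: ennreal_mult split: prod.splits)
  finally show ?thesis .
qed

lemma gd_gd: "gd x * gd y = exp (- (x\<^sup>2 + y\<^sup>2)) / pi"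
  by (simp add: gd_def exp_add[symmetric] power2_eq_square)

lemma gd_rot: "c\<^sup>2 + d\<^sup>2 = 1 \<Longrightarrow> gd (fst (rot c d p)) * gd (snd (rot c d p)) = gd (fst p) * gd (snd p)"
proof -
  assume cd: "c\<^sup>2 + d\<^sup>2 = 1"
  have "(c * fst p - d * snd p)\<^sup>2 + (d * fst p + c * snd p)\<^sup>2 = (c\<^sup>2 + d\<^sup>2) * ((fst p)\<^sup>2 + (snd p)\<^sup>2)"
    by (simp add: algebra_simps power2_eq_square)
  then show ?thesis using cd by (simp add: gd_gd rot_def)
qed

lemma NN2_rot_nn:
  fixes F :: "real \<times> real \<Rightarrow> ennreal"
  assumes F[measurable]: "F \<in> borel_measurable (lborel \<Otimes>\<^sub>M lborel)" and cd: "c\<^sup>2 + d\<^sup>2 = 1"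
  shows "(\<integral>\<^sup>+p. F (rot c d p) \<partial>(NN \<Otimes>\<^sub>M NN)) = (\<integral>\<^sup>+p. F p \<partial>(NN \<Otimes>\<^sub>M NN))"
proof -
  define K where "K = (\<lambda>p. ennreal (gd (fst p) * gd (snd p)) * F p)"
  have [measurable]: "K \<in> borel_measurable (lborel \<Otimes>\<^sub>M lborel)" unfolding K_def by measurable
  have "(\<integral>\<^sup>+p. F (rot c d p) \<partial>(NN \<Otimes>\<^sub>M NN)) = (\<integral>\<^sup>+p. K (rot c d p) \<partial>(lborel \<Otimes>\<^sub>M lborel))"
    unfolding NN2_density K_def using cd
    by (subst nn_integral_density) (auto simp: gd_rot)
  also have "\<dots> = (\<integral>\<^sup>+p. K p \<partial>(lborel \<Otimes>\<^sub>M lborel))" by (rule leb_rot) (use cd in auto)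
  also have "\<dots> = (\<integral>\<^sup>+p. F p \<partial>(NN \<Otimes>\<^sub>M NN))"
    unfolding NN2_density K_def by (subst nn_integral_density) auto
  finally show ?thesis .
qed

lemma NN2_rot:
  assumes cd: "c\<^sup>2 + d\<^sup>2 = 1"
  shows "distr (NN \<Otimes>\<^sub>M NN) (NN \<Otimes>\<^sub>M NN) (rot c d) = NN \<Otimes>\<^sub>M NN"
proof (rule measure_eqI)
  show "sets (distr (NN \<Otimes>\<^sub>M NN) (NN \<Otimes>\<^sub>M NN) (rot c d)) = sets (NN \<Otimes>\<^sub>M NN)" by simp
  fix A assume A: "A \<in> sets (distr (NN \<Otimes>\<^sub>M NN) (NN \<Otimes>\<^sub>M NN) (rot c d))"
  then have A': "A \<in> sets (lborel \<Otimes>\<^sub>M lborel)" by simp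
  have m: "rot c d \<in> NN \<Otimes>\<^sub>M NN \<rightarrow>\<^sub>M NN \<Otimes>\<^sub>M NN" by simp
  have "emeasure (distr (NN \<Otimes>\<^sub>M NN) (NN \<Otimes>\<^sub>M NN) (rot c d)) A = (\<integral>\<^sup>+p. indicator A (rot c d p) \<partial>(NN \<Otimes>\<^sub>M NN))"
  proof -
    have s: "rot c d -` A \<inter> space (NN \<Otimes>\<^sub>M NN) \<in> sets (NN \<Otimes>\<^sub>M NN)" using A' by measurable
    have "emeasure (distr (NN \<Otimes>\<^sub>M NN) (NN \<Otimes>\<^sub>M NN) (rot c d)) A = emeasure (NN \<Otimes>\<^sub>M NN) (rot c d -` A \<inter> space (NN \<Otimes>\<^sub>M NN))"
      using A by (subst emeasure_distr) auto
    also have "\<dots> = (\<integral>\<^sup>+p. indicator (rot c d -` A \<inter> space (NN \<Otimes>\<^sub>M NN)) p \<partial>(NN \<Otimes>\<^sub>M NN))"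
      using s by simp
    also have "\<dots> = (\<integral>\<^sup>+p. indicator A (rot c d p) \<partial>(NN \<Otimes>\<^sub>M NN))"
      by (rule nn_integral_cong) (auto simp: indicator_def space_pair_measure)
    finally show ?thesis .
  qed
  also have "\<dots> = (\<integral>\<^sup>+p. indicator A p \<partial>(NN \<Otimes>\<^sub>M NN))"
    by (rule NN2_rot_nn[OF _ cd]) (use A' in measurable)
  also have "\<dots> = emeasure (NN \<Otimes>\<^sub>M NN) A" using A by simp
  finally show "emeasure (distr (NN \<Otimes>\<^sub>M NN) (NN \<Otimes>\<^sub>M NN) (rot c d)) A = emeasure (NN \<Otimes>\<^sub>M NN) A" .
qed

definition lin2 :: "complex \<Rightarrow> complex \<Rightarrow> real \<times> real \<Rightarrow> complex" where
  "lin2 u v p = of_real (fst p) * u + of_real (snd p) * v"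

lemma lin2_measurable[measurable]: "lin2 u v \<in> borel_measurable (lborel \<Otimes>\<^sub>M lborel)"
  unfolding lin2_def by measurable

lemma lin2_rot: "lin2 u v (rot c d p) = lin2 (of_real c * u + of_real d * v) (- of_real d * u + of_real c * v) p"
  by (simp add: lin2_def rot_def algebra_simps)

lemma NN2_lin2_rot:
  fixes F :: "complex \<Rightarrow> ennreal"
  assumes F[measurable]: "F \<in> borel_measurable borel" and cd: "c\<^sup>2 + d\<^sup>2 = 1"
  shows "(\<integral>\<^sup>+p. F (lin2 (of_real c * u + of_real d * v) (- of_real d * u + of_real c * v) p) \<partial>(NN \<Otimes>\<^sub>M NN))
       = (\<integral>\<^sup>+p. F (lin2 u v p) \<partial>(NN \<Otimes>\<^sub>M NN))"
  using NN2_rot_nn[of "\<lambda>p. F (lin2 u v p)", OF _ cd] by (simp add: lin2_rot)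

definition T3 :: "complex \<Rightarrow> complex \<Rightarrow> complex \<Rightarrow> (complex \<Rightarrow> ennreal) \<Rightarrow> ennreal" where
  "T3 u v w F = (\<integral>\<^sup>+p. (\<integral>\<^sup>+r. F (lin2 u v p + of_real r * w) \<partial>NN) \<partial>(NN \<Otimes>\<^sub>M NN))"

lemma T3_rot_uv:
  fixes F :: "complex \<Rightarrow> ennreal"
  assumes F[measurable]: "F \<in> borel_measurable borel" and cd: "c\<^sup>2 + d\<^sup>2 = 1"
  shows "T3 (of_real c * u + of_real d * v) (- of_real d * u + of_real c * v) w F = T3 u v w F"
  unfolding T3_def
  by (rule NN2_lin2_rot[OF _ cd, where F="\<lambda>x. \<integral>\<^sup>+r. F (x + of_real r * w) \<partial>NN"]) measurable

lemma T3_regroup: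
  fixes F :: "complex \<Rightarrow> ennreal"
  assumes F[measurable]: "F \<in> borel_measurable borel"
  shows "T3 u v w F = (\<integral>\<^sup>+s. (\<integral>\<^sup>+q. F (of_real s * u + lin2 v w q) \<partial>(NN \<Otimes>\<^sub>M NN)) \<partial>NN)"
proof -
  have "T3 u v w F = (\<integral>\<^sup>+s. \<integral>\<^sup>+t. (\<integral>\<^sup>+r. F (of_real s * u + of_real t * v + of_real r * w) \<partial>NN) \<partial>NN \<partial>NN)"
    unfolding T3_def lin2_def by (subst NN.nn_integral_fst[symmetric]) auto
  also have "\<dots> = (\<integral>\<^sup>+s. (\<integral>\<^sup>+q. F (of_real s * u + lin2 v w q) \<partial>(NN \<Otimes>\<^sub>M NN)) \<partial>NN)"
  proof (rule nn_integral_cong)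
    fix s
    show "(\<integral>\<^sup>+t. (\<integral>\<^sup>+r. F (of_real s * u + of_real t * v + of_real r * w) \<partial>NN) \<partial>NN) = (\<integral>\<^sup>+q. F (of_real s * u + lin2 v w q) \<partial>(NN \<Otimes>\<^sub>M NN))"
      unfolding lin2_def by (subst NN.nn_integral_fst[symmetric]) (auto simp: add.assoc)
  qed
  finally show ?thesis .
qed

lemma T3_rot_vw:
  fixes F :: "complex \<Rightarrow> ennreal"
  assumes F[measurable]: "F \<in> borel_measurable borel" and cd: "c\<^sup>2 + d\<^sup>2 = 1"
  shows "T3 u (of_real c * v + of_real d * w) (- of_real d * v + of_real c * w) F = T3 u v w F"
  unfolding T3_regroup[OF F]
  by (rule nn_integral_cong, rule NN2_lin2_rot[OF _ cd, where F="\<lambda>x. F (of_real s * u + x)" for s]) measurable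

lemma T3_zero:
  fixes F :: "complex \<Rightarrow> ennreal"
  assumes F[measurable]: "F \<in> borel_measurable borel"
  shows "T3 u v 0 F = (\<integral>\<^sup>+p. F (lin2 u v p) \<partial>(NN \<Otimes>\<^sub>M NN))"
  unfolding T3_def by simp

lemma choose_cd: "\<exists>c d::real. c\<^sup>2 + d\<^sup>2 = 1 \<and> - d * a + c * b = 0"
proof (cases "a = 0 \<and> b = 0")
  case True then show ?thesis by (intro exI[of _ 1] exI[of _ 0]) auto
next
  case False
  define r where "r = sqrt (a\<^sup>2 + b\<^sup>2)"
  have pos: "a\<^sup>2 + b\<^sup>2 > 0" using False by (simp add: add_pos_nonneg sum_power2_gt_zero_iff)
  then have r: "r > 0" "r\<^sup>2 = a\<^sup>2 + b\<^sup>2" by (auto simp: r_def)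
  have 1: "(a / r)\<^sup>2 + (b / r)\<^sup>2 = 1" using r False by (simp add: power_divide add_divide_distrib[symmetric])
  have 2: "- (b / r) * a + (a / r) * b = 0" by (simp add: field_simps)
  show ?thesis using 1 2 by blast
qed

lemma pair_inv_norm:
  fixes u v :: complex and c d :: real
  assumes "c\<^sup>2 + d\<^sup>2 = 1"
  shows "(cmod (of_real c * u + of_real d * v))\<^sup>2 + (cmod (- of_real d * u + of_real c * v))\<^sup>2 = (cmod u)\<^sup>2 + (cmod v)\<^sup>2"
proof -
  have "(cmod (of_real c * u + of_real d * v))\<^sup>2 + (cmod (- of_real d * u + of_real c * v))\<^sup>2
      = (c\<^sup>2 + d\<^sup>2) * ((Re u)\<^sup>2 + (Im u)\<^sup>2 + (Re v)\<^sup>2 + (Im v)\<^sup>2)"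
    unfolding cmod_power2 by (simp add: algebra_simps power2_eq_square)
  then show ?thesis using assms by (simp add: cmod_power2)
qed

lemma pair_inv_sq:
  fixes u v :: complex and c d :: real
  assumes "c\<^sup>2 + d\<^sup>2 = 1"
  shows "(of_real c * u + of_real d * v)\<^sup>2 + (- of_real d * u + of_real c * v)\<^sup>2 = u\<^sup>2 + v\<^sup>2"
proof -
  have "(of_real c * u + of_real d * v)\<^sup>2 + (- of_real d * u + of_real c * v)\<^sup>2 = of_real (c\<^sup>2 + d\<^sup>2) * (u\<^sup>2 + v\<^sup>2)"
    by (simp add: algebra_simps power2_eq_square)
  then show ?thesis using assms by simp
qed

lemma givens:
  "\<exists>u' v'. (\<forall>F \<in> borel_measurable borel. T3 u v w F = (\<integral>\<^sup>+p. F (lin2 u' v' p) \<partial>(NN \<Otimes>\<^sub>M NN)))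
      \<and> (cmod u')\<^sup>2 + (cmod v')\<^sup>2 = (cmod u)\<^sup>2 + (cmod v)\<^sup>2 + (cmod w)\<^sup>2
      \<and> u'\<^sup>2 + v'\<^sup>2 = u\<^sup>2 + v\<^sup>2 + w\<^sup>2"
proof -
  obtain c1 d1 where cd1: "c1\<^sup>2 + d1\<^sup>2 = 1" and e1: "- d1 * Re v + c1 * Re w = 0" using choose_cd by blast
  define v1 where "v1 = of_real c1 * v + of_real d1 * w"
  define w1 where "w1 = - of_real d1 * v + of_real c1 * w"
  have Rw1: "Re w1 = 0" using e1 by (simp add: w1_def)
  obtain c2 d2 where cd2: "c2\<^sup>2 + d2\<^sup>2 = 1" and e2: "- d2 * Re u + c2 * Re v1 = 0" using choose_cd by blast
  define u2 where "u2 = of_real c2 * u + of_real d2 * v1"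
  define v2 where "v2 = - of_real d2 * u + of_real c2 * v1"
  have Rv2: "Re v2 = 0" using e2 by (simp add: v2_def)
  obtain c3 d3 where cd3: "c3\<^sup>2 + d3\<^sup>2 = 1" and e3: "- d3 * Im v2 + c3 * Im w1 = 0" using choose_cd by blast
  define v3 where "v3 = of_real c3 * v2 + of_real d3 * w1"
  define w3 where "w3 = - of_real d3 * v2 + of_real c3 * w1"
  have w3: "w3 = 0" using e3 Rv2 Rw1 by (simp add: w3_def complex_eq_iff)
  have "T3 u v w F = (\<integral>\<^sup>+p. F (lin2 u2 v3 p) \<partial>(NN \<Otimes>\<^sub>M NN))" if F: "F \<in> borel_measurable borel" for F
  proof -
    have "T3 u v w F = T3 u v1 w1 F" unfolding v1_def w1_def by (rule T3_rot_vw[OF F cd1, symmetric])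
    also have "\<dots> = T3 u2 v2 w1 F" unfolding u2_def v2_def by (rule T3_rot_uv[OF F cd2, symmetric])
    also have "\<dots> = T3 u2 v3 w3 F" unfolding v3_def w3_def by (rule T3_rot_vw[OF F cd3, symmetric])
    also have "\<dots> = (\<integral>\<^sup>+p. F (lin2 u2 v3 p) \<partial>(NN \<Otimes>\<^sub>M NN))" unfolding w3 by (rule T3_zero[OF F])
    finally show ?thesis .
  qed
  moreover have "(cmod u2)\<^sup>2 + (cmod v3)\<^sup>2 = (cmod u)\<^sup>2 + (cmod v)\<^sup>2 + (cmod w)\<^sup>2"
  proof -
    have a: "(cmod v1)\<^sup>2 + (cmod w1)\<^sup>2 = (cmod v)\<^sup>2 + (cmod w)\<^sup>2" unfolding v1_def w1_def by (rule pair_inv_norm[OF cd1])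
    have b: "(cmod u2)\<^sup>2 + (cmod v2)\<^sup>2 = (cmod u)\<^sup>2 + (cmod v1)\<^sup>2" unfolding u2_def v2_def by (rule pair_inv_norm[OF cd2])
    have c: "(cmod v3)\<^sup>2 + (cmod w3)\<^sup>2 = (cmod v2)\<^sup>2 + (cmod w1)\<^sup>2" unfolding v3_def w3_def by (rule pair_inv_norm[OF cd3])
    show ?thesis using a b c w3 by simp
  qed
  moreover have "u2\<^sup>2 + v3\<^sup>2 = u\<^sup>2 + v\<^sup>2 + w\<^sup>2"
  proof -
    have a: "v1\<^sup>2 + w1\<^sup>2 = v\<^sup>2 + w\<^sup>2" unfolding v1_def w1_def by (rule pair_inv_sq[OF cd1])
    have b: "u2\<^sup>2 + v2\<^sup>2 = u\<^sup>2 + v1\<^sup>2" unfolding u2_def v2_def by (rule pair_inv_sq[OF cd2])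
    have c: "v3\<^sup>2 + w3\<^sup>2 = v2\<^sup>2 + w1\<^sup>2" unfolding v3_def w3_def by (rule pair_inv_sq[OF cd3])
    show ?thesis using a b c w3 by (simp add: algebra_simps) (metis add.commute add.left_commute)
  qed
  ultimately show ?thesis by blast
qed

lemma emeasure_NN2_UNIV[simp]: "emeasure (NN \<Otimes>\<^sub>M NN) UNIV = 1"
  using NN2.emeasure_space_1 by (simp add: space_pair_measure)

lemma reduce:
  fixes c :: "'i \<Rightarrow> complex"
  assumes "finite I"
  shows "\<exists>u v. (\<forall>F \<in> borel_measurable borel.
      (\<integral>\<^sup>+x. F (\<Sum>i\<in>I. of_real (x i) * c i) \<partial>(PiM I (\<lambda>_. NN))) = (\<integral>\<^sup>+p. F (lin2 u v p) \<partial>(NN \<Otimes>\<^sub>M NN)))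
      \<and> (cmod u)\<^sup>2 + (cmod v)\<^sup>2 = (\<Sum>i\<in>I. (cmod (c i))\<^sup>2)
      \<and> u\<^sup>2 + v\<^sup>2 = (\<Sum>i\<in>I. (c i)\<^sup>2)"
  using assms
proof (induction I rule: finite_induct)
  interpret P: product_prob_space "\<lambda>_::'i. NN" by unfold_locales
  case empty
  have "(\<integral>\<^sup>+x. F (\<Sum>i\<in>{}. of_real (x i) * c i) \<partial>(PiM {} (\<lambda>_. NN))) = (\<integral>\<^sup>+p. F (lin2 0 0 p) \<partial>(NN \<Otimes>\<^sub>M NN))" for F
    by (simp add: lin2_def PiM_empty NN2.emeasure_space_1)
  then show ?case by (intro exI[of _ 0] exI[of _ 0]) simp
next
  interpret P: product_prob_space "\<lambda>_::'i. NN" by unfold_locales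
  case (insert j I)
  from insert.IH obtain u v where
    IH: "\<And>F. F \<in> borel_measurable borel \<Longrightarrow> (\<integral>\<^sup>+x. F (\<Sum>i\<in>I. of_real (x i) * c i) \<partial>(PiM I (\<lambda>_. NN))) = (\<integral>\<^sup>+p. F (lin2 u v p) \<partial>(NN \<Otimes>\<^sub>M NN))"
    and n: "(cmod u)\<^sup>2 + (cmod v)\<^sup>2 = (\<Sum>i\<in>I. (cmod (c i))\<^sup>2)" and q: "u\<^sup>2 + v\<^sup>2 = (\<Sum>i\<in>I. (c i)\<^sup>2)"
    by blast
  obtain u' v' where G: "\<forall>F \<in> borel_measurable borel. T3 u v (c j) F = (\<integral>\<^sup>+p. F (lin2 u' v' p) \<partial>(NN \<Otimes>\<^sub>M NN))"
    and n': "(cmod u')\<^sup>2 + (cmod v')\<^sup>2 = (cmod u)\<^sup>2 + (cmod v)\<^sup>2 + (cmod (c j))\<^sup>2"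
    and q': "u'\<^sup>2 + v'\<^sup>2 = u\<^sup>2 + v\<^sup>2 + (c j)\<^sup>2"
    using givens by blast
  have "(\<integral>\<^sup>+x. F (\<Sum>i\<in>insert j I. of_real (x i) * c i) \<partial>(PiM (insert j I) (\<lambda>_. NN))) = (\<integral>\<^sup>+p. F (lin2 u' v' p) \<partial>(NN \<Otimes>\<^sub>M NN))"
    if F[measurable]: "F \<in> borel_measurable borel" for F
  proof -
    have "(\<integral>\<^sup>+x. F (\<Sum>i\<in>insert j I. of_real (x i) * c i) \<partial>(PiM (insert j I) (\<lambda>_. NN)))
        = (\<integral>\<^sup>+x. (\<integral>\<^sup>+y. F (\<Sum>i\<in>insert j I. of_real ((x(j := y)) i) * c i) \<partial>NN) \<partial>(PiM I (\<lambda>_. NN)))"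
      by (rule P.product_nn_integral_insert) (use insert in auto)
    also have "\<dots> = (\<integral>\<^sup>+x. (\<lambda>w. \<integral>\<^sup>+y. F (w + of_real y * c j) \<partial>NN) (\<Sum>i\<in>I. of_real (x i) * c i) \<partial>(PiM I (\<lambda>_. NN)))"
    proof (rule nn_integral_cong)
      fix x
      have "(\<Sum>i\<in>insert j I. of_real ((x(j := y)) i) * c i) = (\<Sum>i\<in>I. of_real (x i) * c i) + of_real y * c j" for y
      proof -
        have "(\<Sum>i\<in>I. of_real ((x(j := y)) i) * c i) = (\<Sum>i\<in>I. of_real (x i) * c i)"
          using insert(2) by (intro sum.cong) auto
        then show ?thesis using insert(1,2) by (simp add: add.commute)
      qed
      then show "(\<integral>\<^sup>+y. F (\<Sum>i\<in>insert j I. of_real ((x(j := y)) i) * c i) \<partial>NN) = (\<lambda>w. \<integral>\<^sup>+y. F (w + of_real y * c j) \<partial>NN) (\<Sum>i\<in>I. of_real (x i) * c i)"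
        by simp
    qed
    also have "\<dots> = (\<integral>\<^sup>+p. (\<lambda>w. \<integral>\<^sup>+y. F (w + of_real y * c j) \<partial>NN) (lin2 u v p) \<partial>(NN \<Otimes>\<^sub>M NN))"
      by (rule IH) measurable
    also have "\<dots> = T3 u v (c j) F" by (simp add: T3_def)
    also have "\<dots> = (\<integral>\<^sup>+p. F (lin2 u' v' p) \<partial>(NN \<Otimes>\<^sub>M NN))" using G F by blast
    finally show ?thesis .
  qed
  moreover have "(cmod u')\<^sup>2 + (cmod v')\<^sup>2 = (\<Sum>i\<in>insert j I. (cmod (c i))\<^sup>2)" using n n' insert by simp
  moreover have "u'\<^sup>2 + v'\<^sup>2 = (\<Sum>i\<in>insert j I. (c i)\<^sup>2)" using q q' insert by (simp add: add.commute)
  ultimately show ?case by blast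
qed



definition phi :: "('a \<Rightarrow> real) \<Rightarrow> 'a::euclidean_space" where "phi f = (\<Sum>b\<in>Basis. f b *\<^sub>R b)"

lemma phi_measurable: assumes "sets M = sets borel" shows "phi \<in> borel_measurable (PiM Basis (\<lambda>_. M))"
  unfolding phi_def
  apply (intro borel_measurable_sum borel_measurable_scaleR borel_measurable_const)
  apply (subst measurable_cong_sets[OF refl assms, symmetric])
  apply (rule measurable_component_singleton)
  by simp

lemma phi_measurable_lborel[measurable]: "phi \<in> borel_measurable (PiM Basis (\<lambda>_. lborel))"
  by (rule phi_measurable) simp

lemma phi_measurable_NN[measurable]: "phi \<in> borel_measurable (PiM Basis (\<lambda>_. NN))"
  by (rule phi_measurable) simp

lemma phi_inner: "b \<in> Basis \<Longrightarrow> inner (phi f) b = f b"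
  by (simp add: phi_def inner_sum_left_Basis)

lemma norm_phi: "(norm (phi f))\<^sup>2 = (\<Sum>b\<in>Basis. (f b)\<^sup>2)"
proof -
  have "(norm (phi f))\<^sup>2 = inner (phi f) (phi f)" by (rule power2_norm_eq_inner)
  also have "\<dots> = (\<Sum>b\<in>Basis. f b * inner b (phi f))" by (simp add: phi_def inner_sum_left)
  also have "\<dots> = (\<Sum>b\<in>Basis. (f b)\<^sup>2)"
  proof (intro sum.cong refl)
    fix b :: 'a assume b: "b \<in> Basis"
    have "inner b (phi f) = f b" using phi_inner[OF b] by (simp add: inner_commute)
    then show "f b * inner b (phi f) = (f b)\<^sup>2" by (simp add: power2_eq_square)
  qed
  finally show ?thesis .
qed

lemma L1: "inverse (sqrt pi) ^ n = pi powr (- real n / 2)"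
proof -
  have "inverse (sqrt pi) = pi powr (-1/2)" by (simp add: powr_minus powr_half_sqrt[symmetric])
  then have "inverse (sqrt pi) ^ n = pi powr (real n * (-1/2))" by (simp add: powr_power)
  then show ?thesis by simp
qed
lemma L2: "finite B \<Longrightarrow> (\<Prod>b\<in>B. exp (- (f b)\<^sup>2) / sqrt pi) = exp (- (\<Sum>b\<in>B. (f b)\<^sup>2)) * inverse (sqrt pi) ^ card B"
proof (induction B rule: finite_induct)
  case (insert x F)
  have "(\<Prod>b\<in>insert x F. exp (- (f b)\<^sup>2) / sqrt pi) = exp (- (f x)\<^sup>2) / sqrt pi * (exp (- (\<Sum>b\<in>F. (f b)\<^sup>2)) * inverse (sqrt pi) ^ card F)"
    using insert by simp
  also have "\<dots> = exp (- ((f x)\<^sup>2 + (\<Sum>b\<in>F. (f b)\<^sup>2))) * inverse (sqrt pi) ^ Suc (card F)"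
    by (simp only: minus_add_distrib exp_add divide_inverse power_Suc mult_ac)
  finally show ?case using insert by simp
qed simp
lemma dens_phi:
  "pi powr (- real DIM('a) / 2) * exp (- (norm (phi f :: 'a::euclidean_space))\<^sup>2) = (\<Prod>b\<in>Basis. gd (f b))"
proof -
  have "(\<Prod>b\<in>(Basis::'a set). gd (f b)) = (\<Prod>b\<in>(Basis::'a set). exp (- (f b)\<^sup>2) / sqrt pi)"
    by (simp add: gd_def)
  also have "\<dots> = exp (- (\<Sum>b\<in>(Basis::'a set). (f b)\<^sup>2)) * inverse (sqrt pi) ^ DIM('a)"
    by (rule L2) simp
  also have "\<dots> = exp (- (norm (phi f :: 'a))\<^sup>2) * pi powr (- real DIM('a) / 2)"
    by (simp add: L1 norm_phi)
  finally show ?thesis by simp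
qed

lemma ind_PiE:
  fixes A :: "'i \<Rightarrow> 'b set"
  assumes "finite I" "f \<in> extensional I"
  shows "(indicator (Pi\<^sub>E I A) f :: ennreal) = (\<Prod>b\<in>I. indicator (A b) (f b))"
proof (cases "\<forall>b\<in>I. f b \<in> A b")
  case True then show ?thesis using assms by (auto simp: PiE_def indicator_def)
next
  case False
  then obtain b where b: "b \<in> I" "f b \<notin> A b" by blast
  then have "(\<Prod>b\<in>I. indicator (A b) (f b) :: ennreal) = indicator (A b) (f b) * (\<Prod>b\<in>I-{b}. indicator (A b) (f b))"
    using assms(1) by (simp add: prod.remove)
  also have "\<dots> = 0" using b by simp
  finally show ?thesis using b by (auto simp: PiE_def indicator_def)
qed

lemma gauss_eq:
  "density lborel (\<lambda>a::'a::euclidean_space. ennreal (pi powr (- real DIM('a) / 2) * exp (- (norm a)\<^sup>2)))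
     = distr (PiM Basis (\<lambda>_. NN)) borel phi"
proof -
  interpret NP: product_prob_space "\<lambda>_::'a. NN" by unfold_locales
  interpret LP: product_sigma_finite "\<lambda>_::'a. lborel" by unfold_locales
  define P where "P = (\<lambda>a::'a. ennreal (pi powr (- real DIM('a) / 2) * exp (- (norm a)\<^sup>2)))"
  have [measurable]: "P \<in> borel_measurable borel" unfolding P_def by measurable
  have lb: "(lborel::'a measure) = distr (PiM Basis (\<lambda>_. lborel)) borel phi"
    using lborel_eq unfolding phi_def .
  have "density lborel P = distr (density (PiM Basis (\<lambda>_. lborel)) (\<lambda>f. P (phi f))) borel phi"
    by (subst lb, rule density_distr) measurable
  also have "density (PiM Basis (\<lambda>_. lborel)) (\<lambda>f. P (phi f)) = PiM Basis (\<lambda>_. NN)"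
  proof (rule NP.PiM_eqI)
    show "finite (Basis::'a set)" by simp
    show "sets (density (PiM Basis (\<lambda>_. lborel)) (\<lambda>f. P (phi f))) = sets (PiM Basis (\<lambda>_. NN))"
      unfolding sets_density by (rule sets_PiM_cong) auto
    fix A :: "'a \<Rightarrow> real set" assume A: "\<And>i. i \<in> Basis \<Longrightarrow> A i \<in> sets NN"
    have A': "Pi\<^sub>E Basis A \<in> sets (PiM Basis (\<lambda>_. lborel))"
      using A by (intro sets_PiM_I_finite) auto
    have "emeasure (density (PiM Basis (\<lambda>_. lborel)) (\<lambda>f. P (phi f))) (Pi\<^sub>E Basis A)
        = (\<integral>\<^sup>+f. P (phi f) * indicator (Pi\<^sub>E Basis A) f \<partial>(PiM Basis (\<lambda>_. lborel)))"
      by (rule emeasure_density[OF _ A']) measurable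
    also have "\<dots> = (\<integral>\<^sup>+f. (\<Prod>b\<in>Basis. ennreal (gd (f b)) * indicator (A b) (f b)) \<partial>(PiM Basis (\<lambda>_. lborel)))"
    proof (rule nn_integral_cong)
      fix f :: "'a \<Rightarrow> real" assume f: "f \<in> space (PiM Basis (\<lambda>_. lborel :: real measure))"
      then have ext: "f \<in> extensional Basis" by (simp add: space_PiM PiE_def)
      have "P (phi f) = (\<Prod>b\<in>Basis. ennreal (gd (f b)))"
        unfolding P_def dens_phi by (simp add: prod_ennreal)
      then show "P (phi f) * indicator (Pi\<^sub>E Basis A) f = (\<Prod>b\<in>Basis. ennreal (gd (f b)) * indicator (A b) (f b))"
        using ind_PiE[OF _ ext, of A] by (simp add: prod.distrib)
    qed
    also have "\<dots> = (\<Prod>b\<in>Basis. \<integral>\<^sup>+x. ennreal (gd x) * indicator (A b) x \<partial>lborel)"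
      by (rule LP.product_nn_integral_prod) (use A in auto)
    also have "\<dots> = (\<Prod>b\<in>Basis. emeasure NN (A b))"
      using A by (intro prod.cong refl) (simp add: NN_def emeasure_density)
    finally show "emeasure (density (PiM Basis (\<lambda>_. lborel)) (\<lambda>f. P (phi f))) (Pi\<^sub>E Basis A) = (\<Prod>b\<in>Basis. emeasure NN (A b))" .
  qed
  finally show ?thesis unfolding P_def .
qed



lemma distr_eq_from_nn:
  fixes X :: "'a \<Rightarrow> 'c::topological_space" and Y :: "'b \<Rightarrow> 'c"
  assumes X[measurable]: "X \<in> borel_measurable M" and Y[measurable]: "Y \<in> borel_measurable M'"
    and eq: "\<And>F::'c \<Rightarrow> ennreal. F \<in> borel_measurable borel \<Longrightarrow> (\<integral>\<^sup>+x. F (X x) \<partial>M) = (\<integral>\<^sup>+y. F (Y y) \<partial>M')"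
  shows "distr M borel X = distr M' borel Y"
proof (rule measure_eqI)
  show "sets (distr M borel X) = sets (distr M' borel Y)" by simp
  fix A assume A: "A \<in> sets (distr M borel X)"
  then have A'[measurable]: "A \<in> sets borel" by simp
  have "emeasure (distr M borel X) A = (\<integral>\<^sup>+x. indicator A x \<partial>distr M borel X)" using A by simp
  also have "\<dots> = (\<integral>\<^sup>+x. indicator A (X x) \<partial>M)" by (rule nn_integral_distr) measurable
  also have "\<dots> = (\<integral>\<^sup>+y. indicator A (Y y) \<partial>M')" by (rule eq) measurable
  also have "\<dots> = (\<integral>\<^sup>+x. indicator A x \<partial>distr M' borel Y)" by (rule nn_integral_distr[symmetric]) measurable
  also have "\<dots> = emeasure (distr M' borel Y) A" using A by simp
  finally show "emeasure (distr M borel X) A = emeasure (distr M' borel Y) A" .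
qed

lemma Basis_cart_real: "(Basis :: (real^'n) set) = range (\<lambda>i. axis i 1)"
  by (auto simp: Basis_vec_def)

lemma sum_Basis_cart: "(\<Sum>b\<in>(Basis :: (real^'n) set). g b) = (\<Sum>i\<in>UNIV. g (axis i 1))"
  unfolding Basis_cart_real by (subst sum.reindex) (auto simp: inj_on_def axis_eq_axis)

lemma phi_component: "(phi f :: real^'n) $ i = (\<Sum>b\<in>Basis. f b * b $ i)"
  by (simp add: phi_def sum_component)

lemma norm_cvec_sq: "(norm (z :: complex^'n))\<^sup>2 = (\<Sum>i\<in>UNIV. (cmod (z $ i))\<^sup>2)"
  by (simp add: norm_vec_def L2_set_def sum_nonneg)

lemma gauss_cart: "(gauss_measure :: (real^'n) measure) = distr (PiM Basis (\<lambda>_. NN)) borel phi"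
  unfolding gauss_measure_def using gauss_eq[where 'a="real^'n"] by simp

definition Wz :: "complex^'n \<Rightarrow> real^'n \<Rightarrow> complex" where
  "Wz z a = (\<Sum>i\<in>UNIV. of_real (a $ i) * z $ i)"

lemma Wz_measurable[measurable]: "Wz z \<in> borel_measurable borel"
  unfolding Wz_def by measurable

lemma snsq: fixes z :: "complex^'n" shows "section_norm_sq a z = real CARD('n) * (cmod (Wz z a))\<^sup>2 / (norm z)\<^sup>2"
proof -
  have "real_section a z = of_real (sqrt (real CARD('n))) * Wz z a"
    unfolding real_section_def Wz_def by (simp add: sum_distrib_left algebra_simps)
  then show ?thesis unfolding section_norm_sq_def by (simp add: norm_mult power_mult_distrib)
qed

definition cb :: "complex^'n \<Rightarrow> real^'n \<Rightarrow> complex" where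
  "cb z b = (\<Sum>i\<in>UNIV. of_real (b $ i) * z $ i)"

lemma Wz_phi: "Wz z (phi f) = (\<Sum>b\<in>Basis. of_real (f b) * cb z b)"
proof -
  have "Wz z (phi f) = (\<Sum>i\<in>UNIV. \<Sum>b\<in>Basis. of_real (f b) * (of_real (b $ i) * z $ i))"
    unfolding Wz_def phi_component by (simp add: sum_distrib_right mult.assoc)
  also have "\<dots> = (\<Sum>b\<in>Basis. of_real (f b) * cb z b)"
    unfolding cb_def by (subst sum.swap) (simp add: sum_distrib_left)
  finally show ?thesis .
qed

lemma cb_axis: "cb z (axis j 1) = z $ j"
proof -
  have "cb z (axis j 1) = (\<Sum>i\<in>UNIV. if i = j then z $ i else 0)"
    unfolding cb_def by (intro sum.cong) (auto simp: axis_def)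
  then show ?thesis by simp
qed

lemma E_CP_transfer:
  fixes z :: "complex^'n"
  shows "\<exists>u v. E_CP z = (\<integral>p. ln (real CARD('n) * (cmod (lin2 u v p))\<^sup>2 / (norm z)\<^sup>2) \<partial>(NN \<Otimes>\<^sub>M NN))
     \<and> (cmod u)\<^sup>2 + (cmod v)\<^sup>2 = (norm z)\<^sup>2 \<and> u\<^sup>2 + v\<^sup>2 = (\<Sum>i\<in>UNIV. (z $ i)\<^sup>2)"
proof -
  define H where "H = (\<lambda>w::complex. ln (real CARD('n) * (cmod w)\<^sup>2 / (norm z)\<^sup>2))"
  have [measurable]: "H \<in> borel_measurable borel" unfolding H_def by measurable
  define S where "S = (\<lambda>f::real^'n \<Rightarrow> real. \<Sum>b\<in>Basis. of_real (f b) * cb z b)"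
  have Seq: "S = (\<lambda>f. Wz z (phi f))" by (simp add: S_def Wz_phi fun_eq_iff)
  have [measurable]: "S \<in> borel_measurable (PiM Basis (\<lambda>_. NN))"
    unfolding Seq by measurable
  obtain u v where red: "\<forall>F \<in> borel_measurable borel.
      (\<integral>\<^sup>+x. F (\<Sum>i\<in>Basis. of_real (x i) * cb z i) \<partial>(PiM Basis (\<lambda>_. NN))) = (\<integral>\<^sup>+p. F (lin2 u v p) \<partial>(NN \<Otimes>\<^sub>M NN))"
    and n: "(cmod u)\<^sup>2 + (cmod v)\<^sup>2 = (\<Sum>i\<in>Basis. (cmod (cb z i))\<^sup>2)"
    and q: "u\<^sup>2 + v\<^sup>2 = (\<Sum>i\<in>Basis. (cb z i)\<^sup>2)"
    using reduce[of "Basis :: (real^'n) set" "cb z"] by auto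
  have dist: "distr (PiM Basis (\<lambda>_. NN)) borel S = distr (NN \<Otimes>\<^sub>M NN) borel (lin2 u v)"
    by (rule distr_eq_from_nn) (use red in \<open>auto simp: S_def\<close>)
  have "E_CP z = (\<integral>a. H (Wz z a) \<partial>gauss_measure)"
    unfolding E_CP_def H_def snsq ..
  also have "\<dots> = (\<integral>f. H (Wz z (phi f)) \<partial>PiM Basis (\<lambda>_. NN))"
    unfolding gauss_cart by (rule integral_distr) measurable
  also have "\<dots> = (\<integral>f. H (S f) \<partial>PiM Basis (\<lambda>_. NN))"
    unfolding Wz_phi S_def ..
  also have "\<dots> = (\<integral>w. H w \<partial>distr (PiM Basis (\<lambda>_. NN)) borel S)"
    by (rule integral_distr[symmetric]) measurable
  also have "\<dots> = (\<integral>p. H (lin2 u v p) \<partial>(NN \<Otimes>\<^sub>M NN))"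
    unfolding dist by (rule integral_distr) measurable
  finally have 1: "E_CP z = (\<integral>p. H (lin2 u v p) \<partial>(NN \<Otimes>\<^sub>M NN))" .
  have 2: "(cmod u)\<^sup>2 + (cmod v)\<^sup>2 = (norm z)\<^sup>2" using n by (simp add: sum_Basis_cart cb_axis norm_cvec_sq)
  have 3: "u\<^sup>2 + v\<^sup>2 = (\<Sum>i\<in>UNIV. (z $ i)\<^sup>2)" using q by (simp add: sum_Basis_cart cb_axis)
  show ?thesis using 1 2 3 unfolding H_def by blast
qed



definition Qf :: "real \<times> real \<Rightarrow> real" where "Qf p = (fst p)\<^sup>2 + (snd p)\<^sup>2"

lemma Qf_measurable[measurable]: "Qf \<in> borel_measurable (lborel \<Otimes>\<^sub>M lborel)"
  unfolding Qf_def by measurable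

lemma Qf_measurable'[measurable]: "Qf \<in> borel_measurable (NN \<Otimes>\<^sub>M NN)"
  unfolding Qf_def by measurable

lemma Qf_le_cball: "r \<ge> 0 \<Longrightarrow> {p. Qf p \<le> r} = cball (0::real\<times>real) (sqrt r)"
  by (auto simp: Qf_def cball_def dist_norm norm_prod_def real_sqrt_le_iff' intro: real_le_rsqrt)

lemma emeasure_Qf_le: "emeasure (lborel \<Otimes>\<^sub>M lborel) {p. Qf p \<le> r} = ennreal (pi * max r 0)"
proof (cases "r \<ge> 0")
  case True
  have "emeasure (lborel \<Otimes>\<^sub>M lborel) {p. Qf p \<le> r} = emeasure (lborel :: (real\<times>real) measure) (cball 0 (sqrt r))"
    by (simp add: lborel_prod Qf_le_cball[OF True])
  also have "\<dots> = ennreal (pi * r)"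
    using True by (simp add: emeasure_cball unit_ball_vol_2)
  finally show ?thesis using True by simp
next
  case False
  then have "{p. Qf p \<le> r} = {}" by (auto simp: Qf_def intro: add_nonneg_nonneg) (smt (verit) zero_le_power2)
  then show ?thesis using False by (simp del: Collect_empty_eq)
qed

lemma emeasure_Qf_Ioc:
  assumes ab: "a \<le> b"
  shows "emeasure (lborel \<Otimes>\<^sub>M lborel) (Qf -` {a<..b}) = ennreal (pi * (max b 0 - max a 0))"
proof -
  have "Qf -` {a<..b} = {p. Qf p \<le> b} - {p. Qf p \<le> a}" by auto
  moreover have "emeasure (lborel \<Otimes>\<^sub>M lborel) ({p. Qf p \<le> b} - {p. Qf p \<le> a})
      = emeasure (lborel \<Otimes>\<^sub>M lborel) {p. Qf p \<le> b} - emeasure (lborel \<Otimes>\<^sub>M lborel) {p. Qf p \<le> a}"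
  proof (rule emeasure_Diff)
    show "{p. Qf p \<le> b} \<in> sets (lborel \<Otimes>\<^sub>M lborel)"
      using measurable_sets[OF Qf_measurable, of "{..b}"] by (simp add: space_pair_measure vimage_def)
    show "{p. Qf p \<le> a} \<in> sets (lborel \<Otimes>\<^sub>M lborel)"
      using measurable_sets[OF Qf_measurable, of "{..a}"] by (simp add: space_pair_measure vimage_def)
    show "emeasure (lborel \<Otimes>\<^sub>M lborel) {p. Qf p \<le> a} \<noteq> \<infinity>" by (simp add: emeasure_Qf_le)
    show "{p. Qf p \<le> a} \<subseteq> {p. Qf p \<le> b}" using ab by auto
  qed
  moreover have "ennreal (pi * max b 0) - ennreal (pi * max a 0) = ennreal (pi * (max b 0 - max a 0))"
    using ab by (subst ennreal_minus) (auto simp: algebra_simps)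
  ultimately show ?thesis by (simp add: emeasure_Qf_le)
qed

lemma emeasure_dpi_Ioc:
  assumes ab: "a \<le> b"
  shows "emeasure (density lborel (\<lambda>x. ennreal pi * indicator {0<..} x)) {a<..b} = ennreal (pi * (max b 0 - max a 0))"
proof -
  have "emeasure (density lborel (\<lambda>x. ennreal pi * indicator {0<..} x)) {a<..b}
      = (\<integral>\<^sup>+x. ennreal pi * indicator ({max a 0<..max b 0}) x \<partial>lborel)"
    by (subst emeasure_density) (auto intro!: nn_integral_cong split: split_indicator)
  also have "\<dots> = ennreal pi * emeasure lborel {max a 0<..max b 0}"
    by (subst nn_integral_cmult) auto
  also have "\<dots> = ennreal (pi * (max b 0 - max a 0))"
    using ab by (subst emeasure_lborel_Ioc) (auto simp: ennreal_mult)
  finally show ?thesis .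
qed

lemma Lq_eq: "distr (lborel \<Otimes>\<^sub>M lborel) borel Qf = density lborel (\<lambda>x. ennreal pi * indicator {0<..} x)"
proof (rule measure_eqI_generator_eq[where E="range (\<lambda>(a, b). {a<..b::real})" and \<Omega>=UNIV and A="\<lambda>i. {- real i<..real i}"])
  show "Int_stable (range (\<lambda>(a, b). {a<..b::real}))"
  proof (unfold Int_stable_def, safe)
    fix a b c d :: real
    have "{a<..b} \<inter> {c<..d} = {max a c<..min b d}" by auto
    then show "{a<..b} \<inter> {c<..d} \<in> range (\<lambda>(a, b). {a<..b})" by auto
  qed
  show "range (\<lambda>(a, b). {a<..b::real}) \<subseteq> Pow UNIV" by simp
  show "sets (distr (lborel \<Otimes>\<^sub>M lborel) borel Qf) = sigma_sets UNIV (range (\<lambda>(a, b). {a<..b::real}))"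
    by (simp add: borel_sigma_sets_Ioc)
  show "sets (density lborel (\<lambda>x. ennreal pi * indicator {0<..} x)) = sigma_sets UNIV (range (\<lambda>(a, b). {a<..b::real}))"
    by (simp add: borel_sigma_sets_Ioc)
  show "range (\<lambda>i. {- real i<..real i}) \<subseteq> range (\<lambda>(a, b). {a<..b::real})" by auto
  show "(\<Union>i. {- real i<..real i}) = UNIV"
  proof (safe; simp)
    fix x :: real
    obtain n :: nat where "\<bar>x\<bar> < n" using reals_Archimedean2 by blast
    then show "\<exists>i. - real i < x \<and> x \<le> real i" by (intro exI[of _ n]) auto
  qed
  fix i :: nat
  show "emeasure (distr (lborel \<Otimes>\<^sub>M lborel) borel Qf) {- real i<..real i} \<noteq> \<infinity>"
    by (subst emeasure_distr) (auto simp: space_pair_measure emeasure_Qf_Ioc[simplified])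
next
  fix X assume "X \<in> range (\<lambda>(a, b). {a<..b::real})"
  then obtain a b where X: "X = {a<..b}" by auto
  show "emeasure (distr (lborel \<Otimes>\<^sub>M lborel) borel Qf) X = emeasure (density lborel (\<lambda>x. ennreal pi * indicator {0<..} x)) X"
  proof (cases "a \<le> b")
    case True
    then show ?thesis unfolding X
      by (subst emeasure_distr) (auto simp: space_pair_measure emeasure_Qf_Ioc[simplified] emeasure_dpi_Ioc)
  next
    case False
    then show ?thesis unfolding X by simp
  qed
qed

definition EXPm :: "real measure" where
  "EXPm = density lborel (\<lambda>x. ennreal (exp (- x) * indicator {0<..} x))"

lemma NN2_Qf: "distr (NN \<Otimes>\<^sub>M NN) borel Qf = EXPm"
proof (rule measure_eqI)
  show "sets (distr (NN \<Otimes>\<^sub>M NN) borel Qf) = sets EXPm" by (simp add: EXPm_def)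
  fix A assume "A \<in> sets (distr (NN \<Otimes>\<^sub>M NN) borel Qf)"
  then have A[measurable]: "A \<in> sets borel" by simp
  define h where "h = (\<lambda>x. ennreal (exp (- x) / pi) * indicator A x)"
  have [measurable]: "h \<in> borel_measurable borel" unfolding h_def by measurable
  have "emeasure (distr (NN \<Otimes>\<^sub>M NN) borel Qf) A = (\<integral>\<^sup>+x. indicator A x \<partial>distr (NN \<Otimes>\<^sub>M NN) borel Qf)"
    by simp
  also have "\<dots> = (\<integral>\<^sup>+p. indicator A (Qf p) \<partial>(NN \<Otimes>\<^sub>M NN))"
    by (rule nn_integral_distr) measurable
  also have "\<dots> = (\<integral>\<^sup>+p. ennreal (gd (fst p) * gd (snd p)) * indicator A (Qf p) \<partial>(lborel \<Otimes>\<^sub>M lborel))"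
    unfolding NN2_density by (rule nn_integral_density) measurable
  also have "\<dots> = (\<integral>\<^sup>+p. h (Qf p) \<partial>(lborel \<Otimes>\<^sub>M lborel))"
    by (rule nn_integral_cong) (simp add: h_def gd_gd Qf_def)
  also have "\<dots> = (\<integral>\<^sup>+x. h x \<partial>distr (lborel \<Otimes>\<^sub>M lborel) borel Qf)"
    by (rule nn_integral_distr[symmetric]) measurable
  also have "\<dots> = (\<integral>\<^sup>+x. (ennreal pi * indicator {0<..} x) * h x \<partial>lborel)"
    unfolding Lq_eq by (rule nn_integral_density) measurable
  also have "\<dots> = (\<integral>\<^sup>+x. ennreal (exp (- x) * indicator {0<..} x) * indicator A x \<partial>lborel)"
    by (rule nn_integral_cong) (auto simp: h_def ennreal_mult[symmetric] split: split_indicator)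
  also have "\<dots> = emeasure EXPm A"
    unfolding EXPm_def by (rule emeasure_density[symmetric]) auto
  finally show "emeasure (distr (NN \<Otimes>\<^sub>M NN) borel Qf) A = emeasure EXPm A" .
qed

lemma ennreal_2ab: "0 \<le> a \<Longrightarrow> 0 \<le> b \<Longrightarrow> ennreal (2 * a + b) = 2 * ennreal a + ennreal b"
  by (simp add: ennreal_plus ennreal_mult)

lemma ln_abs_bound:
  fixes t :: real
  assumes t: "t > 0"
  shows "\<bar>ln t\<bar> \<le> 2 * t powr (-1/2) + t"
proof (cases "t \<ge> 1")
  case True
  have "ln t \<le> t - 1" by (rule ln_le_minus_one[OF t])
  moreover have "ln t \<ge> 0" using True by simp
  moreover have "t powr (-1/2) \<ge> 0" by simp
  ultimately show ?thesis by linarith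
next
  case False
  define y where "y = t powr (-1/2)"
  have y: "y > 0" using t by (simp add: y_def)
  have "ln y = - ln t / 2" using t by (simp add: y_def ln_powr)
  moreover have "ln y \<le> y - 1" by (rule ln_le_minus_one[OF y])
  moreover have "ln t \<le> 0" using False t by simp
  ultimately show ?thesis using t unfolding y_def by linarith
qed

lemma integrable_lborel_expln:
  "integrable lborel (\<lambda>x::real. (exp (- x) * indicator {0<..} x) *\<^sub>R ln x)"
proof (rule integrableI_bounded)
  show "(\<lambda>x::real. (exp (- x) * indicator {0<..} x) *\<^sub>R ln x) \<in> borel_measurable lborel" by measurable
  have "(\<integral>\<^sup>+x. ennreal (norm ((exp (- x) * indicator {0<..} x) *\<^sub>R ln x)) \<partial>lborel)
      \<le> (\<integral>\<^sup>+x. (2 * ennreal (indicator {0..} x * x powr (1/2 - 1) / exp x) + ennreal (indicator {0..} x * x powr (2 - 1) / exp x)) \<partial>lborel)"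
  proof (rule nn_integral_mono)
    fix x :: real
    show "ennreal (norm ((exp (- x) * indicator {0<..} x) *\<^sub>R ln x))
        \<le> 2 * ennreal (indicator {0..} x * x powr (1/2 - 1) / exp x) + ennreal (indicator {0..} x * x powr (2 - 1) / exp x)"
    proof (cases "x > 0")
      case True
      have "norm ((exp (- x) * indicator {0<..} x) *\<^sub>R ln x) = \<bar>ln x\<bar> / exp x"
        using True by (simp add: exp_minus field_simps)
      also have "\<dots> \<le> (2 * x powr (-1/2) + x) / exp x"
        by (rule divide_right_mono[OF ln_abs_bound[OF True]]) simp
      also have "\<dots> = 2 * (indicator {0..} x * x powr (1/2 - 1) / exp x) + indicator {0..} x * x powr (2 - 1) / exp x"
        using True by (simp add: add_divide_distrib)
      finally have le: "norm ((exp (- x) * indicator {0<..} x) *\<^sub>R ln x) \<le> 2 * (indicator {0..} x * x powr (1/2 - 1) / exp x) + indicator {0..} x * x powr (2 - 1) / exp x" .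
      have a: "0 \<le> indicator {0..} x * x powr (1/2 - 1) / exp x" and b: "0 \<le> indicator {0..} x * x powr (2 - 1) / exp x"
        using True by auto
      have "ennreal (norm ((exp (- x) * indicator {0<..} x) *\<^sub>R ln x)) \<le> ennreal (2 * (indicator {0..} x * x powr (1/2 - 1) / exp x) + indicator {0..} x * x powr (2 - 1) / exp x)"
        by (rule ennreal_leI[OF le])
      also have "\<dots> = 2 * ennreal (indicator {0..} x * x powr (1/2 - 1) / exp x) + ennreal (indicator {0..} x * x powr (2 - 1) / exp x)"
        by (rule ennreal_2ab[OF a b])
      finally show ?thesis .
    next
      case False
      then show ?thesis by simp
    qed
  qed
  also have "\<dots> = 2 * (\<integral>\<^sup>+x. ennreal (indicator {0..} x * x powr (1/2 - 1) / exp x) \<partial>lborel)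
        + (\<integral>\<^sup>+x. ennreal (indicator {0..} x * x powr (2 - 1) / exp x) \<partial>lborel)"
    by (subst nn_integral_add) (auto simp: nn_integral_cmult)
  also have "\<dots> = 2 * ennreal (Gamma (1/2)) + ennreal (Gamma 2)"
    by (simp only: Gamma_conv_nn_integral_real[symmetric])
  also have "\<dots> < \<infinity>" by (simp add: ennreal_mult_less_top)
  finally show "(\<integral>\<^sup>+x. ennreal (norm ((exp (- x) * indicator {0<..} x) *\<^sub>R ln x)) \<partial>lborel) < \<infinity>" .
qed

lemma integrable_EXPm_ln: "integrable EXPm ln"
  unfolding EXPm_def
  by (subst integrable_density) (use integrable_lborel_expln in auto)

lemma integral_EXPm_ln: "(\<integral>x. ln x \<partial>EXPm) = (LINT \<rho>:{0<..}|lborel. exp (- \<rho>) * ln \<rho>)"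
  unfolding EXPm_def set_lebesgue_integral_def
  by (subst integral_density) (auto intro!: Bochner_Integration.integral_cong split: split_indicator)

lemma integrable_NN2_lnQ: "integrable (NN \<Otimes>\<^sub>M NN) (\<lambda>p. ln (Qf p))"
  using integrable_EXPm_ln unfolding NN2_Qf[symmetric]
  by (subst (asm) integrable_distr_eq) auto

lemma integral_NN2_lnQ: "(\<integral>p. ln (Qf p) \<partial>(NN \<Otimes>\<^sub>M NN)) = (LINT \<rho>:{0<..}|lborel. exp (- \<rho>) * ln \<rho>)"
proof -
  have "(\<integral>p. ln (Qf p) \<partial>(NN \<Otimes>\<^sub>M NN)) = (\<integral>x. ln x \<partial>distr (NN \<Otimes>\<^sub>M NN) borel Qf)"
    by (rule integral_distr[symmetric]) auto
  then show ?thesis by (simp add: NN2_Qf integral_EXPm_ln)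
qed



abbreviation zeta :: "real \<times> real \<Rightarrow> complex" where "zeta \<equiv> lin2 1 \<i>"

lemma lin2_measurable_NN2[measurable]: "lin2 u v \<in> borel_measurable (NN \<Otimes>\<^sub>M NN)"
  using lin2_measurable by (simp add: measurable_cong_sets[OF sets_NN2 refl])

definition wq :: "real \<times> real \<Rightarrow> complex" where "wq p = lin2 1 (- \<i>) p / zeta p"

lemma cnj_zeta: "cnj (zeta p) = lin2 1 (- \<i>) p"
  by (simp add: lin2_def complex_eq_iff)

lemma wq_def': "wq p = cnj (zeta p) / zeta p"
  by (simp add: wq_def cnj_zeta)

lemma wq_measurable[measurable]: "wq \<in> borel_measurable (NN \<Otimes>\<^sub>M NN)"
  unfolding wq_def by measurable

lemma zeta_rot: "zeta (rot c d p) = Complex c d * zeta p"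
  by (simp add: lin2_def rot_def complex_eq_iff)

lemma norm_wq_le: "cmod (wq p) \<le> 1"
  by (cases "zeta p = 0") (auto simp: wq_def' norm_divide)

lemma integral_rot_inv:
  fixes g :: "real \<times> real \<Rightarrow> complex"
  assumes [measurable]: "g \<in> borel_measurable (NN \<Otimes>\<^sub>M NN)" and cd: "c\<^sup>2 + d\<^sup>2 = 1"
  shows "(\<integral>p. g (rot c d p) \<partial>(NN \<Otimes>\<^sub>M NN)) = (\<integral>p. g p \<partial>(NN \<Otimes>\<^sub>M NN))"
proof -
  have "(\<integral>p. g p \<partial>(NN \<Otimes>\<^sub>M NN)) = (\<integral>p. g p \<partial>distr (NN \<Otimes>\<^sub>M NN) (NN \<Otimes>\<^sub>M NN) (rot c d))"
    by (simp add: NN2_rot[OF cd])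
  also have "\<dots> = (\<integral>p. g (rot c d p) \<partial>(NN \<Otimes>\<^sub>M NN))"
    by (rule integral_distr) (auto simp: sets_NN2)
  finally show ?thesis by simp
qed

lemma integral_wq_pow:
  assumes n: "n \<ge> 1"
  shows "(\<integral>p. (wq p) ^ n \<partial>(NN \<Otimes>\<^sub>M NN)) = 0"
proof -
  define \<theta> where "\<theta> = pi / (2 * real n)"
  define c where "c = cos \<theta>"
  define d where "d = sin \<theta>"
  have cd: "c\<^sup>2 + d\<^sup>2 = 1" by (simp add: c_def d_def)
  have e: "Complex c d = cis \<theta>" by (simp add: c_def d_def cis.ctr)
  have fac: "cis (- 2 * \<theta>) ^ n = -1"
  proof -
    have "cis (- 2 * \<theta>) ^ n = cis (real n * (- 2 * \<theta>))" by (rule Complex.DeMoivre)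
    also have "real n * (- 2 * \<theta>) = - pi" using n by (simp add: \<theta>_def field_simps)
    finally show ?thesis by (simp add: cis.ctr complex_eq_iff)
  qed
  have "wq (rot c d p) = cis (- 2 * \<theta>) * wq p" for p
  proof (cases "zeta p = 0")
    case True then show ?thesis by (simp add: wq_def' zeta_rot)
  next
    case False
    have "wq (rot c d p) = (cnj (cis \<theta>) / cis \<theta>) * wq p"
      unfolding wq_def' zeta_rot e using False by (simp add: field_simps)
    also have "cnj (cis \<theta>) / cis \<theta> = cis (- 2 * \<theta>)" by (simp add: cis_cnj cis_divide)
    finally show ?thesis .
  qed
  then have rw: "wq (rot c d p) ^ n = - (wq p ^ n)" for p
    using fac by (simp add: power_mult_distrib)
  have "(\<integral>p. (wq p) ^ n \<partial>(NN \<Otimes>\<^sub>M NN)) = (\<integral>p. (wq (rot c d p)) ^ n \<partial>(NN \<Otimes>\<^sub>M NN))"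
    by (rule integral_rot_inv[symmetric, OF _ cd]) measurable
  also have "\<dots> = - (\<integral>p. (wq p) ^ n \<partial>(NN \<Otimes>\<^sub>M NN))" by (simp add: rw)
  finally show ?thesis by simp
qed

lemma norm_fk: "norm ((-1)^Suc k / of_nat k * (c * wq p)^k :: complex) \<le> cmod c ^ k"
proof (cases "k = 0")
  case True then show ?thesis by simp
next
  case False
  have "norm ((-1)^Suc k / of_nat k * (c * wq p)^k :: complex) = (1 / real k) * (cmod c * cmod (wq p)) ^ k"
    by (simp add: norm_mult norm_power norm_divide)
  also have "\<dots> \<le> 1 * (cmod c * 1) ^ k"
    using False by (intro mult_mono power_mono mult_left_mono norm_wq_le) auto
  finally show ?thesis by simp
qed

lemma Ln_wq:
  fixes c :: complex
  assumes c: "cmod c < 1"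
  shows "integrable (NN \<Otimes>\<^sub>M NN) (\<lambda>p. ln (1 + c * wq p))"
    and "(\<integral>p. ln (1 + c * wq p) \<partial>(NN \<Otimes>\<^sub>M NN)) = 0"
proof -
  define f where "f = (\<lambda>k p. (-1)^Suc k / of_nat k * (c * wq p)^k :: complex)"
  have sums: "(\<lambda>k. f k p) sums ln (1 + c * wq p)" for p
  proof -
    have "cmod (c * wq p) \<le> cmod c" using norm_wq_le[of p] by (simp add: norm_mult mult_left_le)
    then have "cmod (c * wq p) < 1" using c by linarith
    then show ?thesis unfolding f_def by (rule Ln_series)
  qed
  then have eq: "ln (1 + c * wq p) = (\<Sum>k. f k p)" for p by (simp add: sums_unique)
  have fm[measurable]: "f k \<in> borel_measurable (NN \<Otimes>\<^sub>M NN)" for k unfolding f_def by measurable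
  have bound: "norm (f k p) \<le> cmod c ^ k" for k p unfolding f_def by (rule norm_fk)
  have int: "integrable (NN \<Otimes>\<^sub>M NN) (f k)" for k
    by (rule NN2.integrable_const_bound[where B="cmod c ^ k"]) (auto simp: bound)
  have geo: "summable (\<lambda>k. cmod c ^ k)" using c by (simp add: summable_geometric)
  have s1: "AE p in (NN \<Otimes>\<^sub>M NN). summable (\<lambda>k. norm (f k p))"
    by (intro AE_I2 summable_comparison_test[OF _ geo]) (auto simp: bound)
  have ib: "(\<integral>p. norm (f k p) \<partial>(NN \<Otimes>\<^sub>M NN)) \<le> cmod c ^ k" for k
  proof -
    have "(\<integral>p. norm (f k p) \<partial>(NN \<Otimes>\<^sub>M NN)) \<le> (\<integral>p. cmod c ^ k \<partial>(NN \<Otimes>\<^sub>M NN))"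
      by (rule integral_mono) (auto simp: bound int)
    also have "\<dots> = cmod c ^ k" by (simp add: NN2.prob_space)
    finally show ?thesis .
  qed
  have s2: "summable (\<lambda>k. (\<integral>p. norm (f k p) \<partial>(NN \<Otimes>\<^sub>M NN)))"
    by (rule summable_comparison_test[OF _ geo]) (auto simp: ib)
  have zero: "(\<integral>p. f k p \<partial>(NN \<Otimes>\<^sub>M NN)) = 0" for k
  proof (cases "k = 0")
    case True then show ?thesis by (simp add: f_def)
  next
    case False
    have "(\<integral>p. f k p \<partial>(NN \<Otimes>\<^sub>M NN)) = (-1)^Suc k / of_nat k * c ^ k * (\<integral>p. (wq p)^k \<partial>(NN \<Otimes>\<^sub>M NN))"
      unfolding f_def by (simp add: power_mult_distrib mult.assoc)
    also have "\<dots> = 0" using False by (simp add: integral_wq_pow)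
    finally show ?thesis .
  qed
  show "integrable (NN \<Otimes>\<^sub>M NN) (\<lambda>p. ln (1 + c * wq p))"
    unfolding eq by (rule integrable_suminf[OF int s1 s2])
  show "(\<integral>p. ln (1 + c * wq p) \<partial>(NN \<Otimes>\<^sub>M NN)) = 0"
    unfolding eq integral_suminf[OF int s1 s2] zero by simp
qed

lemma AE_NN2_nz: "AE p in (NN \<Otimes>\<^sub>M NN). p \<noteq> (0, 0)"
proof -
  have "AE p in (lborel \<Otimes>\<^sub>M lborel). p \<noteq> ((0, 0) :: real \<times> real)"
    unfolding lborel_prod by (rule AE_lborel_singleton)
  then show ?thesis unfolding NN2_density by (subst AE_density) (auto elim: AE_mp)
qed

lemma zeta_nz: "p \<noteq> (0, 0) \<Longrightarrow> zeta p \<noteq> 0"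
  by (cases p) (simp add: lin2_def complex_eq_iff)

lemma norm_zeta_sq: "(cmod (zeta p))\<^sup>2 = Qf p"
  by (simp add: cmod_power2 lin2_def Qf_def)

lemma core2D:
  fixes A B :: complex
  assumes AB: "cmod B < cmod A"
  shows "integrable (NN \<Otimes>\<^sub>M NN) (\<lambda>p. ln ((cmod (A * zeta p + B * cnj (zeta p)))\<^sup>2))"
    and "(\<integral>p. ln ((cmod (A * zeta p + B * cnj (zeta p)))\<^sup>2) \<partial>(NN \<Otimes>\<^sub>M NN))
           = ln ((cmod A)\<^sup>2) + (LINT \<rho>:{0<..}|lborel. exp (- \<rho>) * ln \<rho>)"
proof -
  have A0: "A \<noteq> 0" using AB by auto
  define c where "c = B / A"
  have c: "cmod c < 1" using AB A0 by (simp add: c_def norm_divide)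
  define G where "G = (\<lambda>p. ln ((cmod A)\<^sup>2) + ln (Qf p) + 2 * Re (ln (1 + c * wq p)))"
  have intG: "integrable (NN \<Otimes>\<^sub>M NN) G"
    unfolding G_def using Ln_wq(1)[OF c] integrable_NN2_lnQ by auto
  have intG_val: "(\<integral>p. G p \<partial>(NN \<Otimes>\<^sub>M NN)) = ln ((cmod A)\<^sup>2) + (LINT \<rho>:{0<..}|lborel. exp (- \<rho>) * ln \<rho>)"
  proof -
    have r: "(\<integral>p. Re (ln (1 + c * wq p)) \<partial>(NN \<Otimes>\<^sub>M NN)) = 0"
      using integral_bounded_linear[OF bounded_linear_Re Ln_wq(1)[OF c]] Ln_wq(2)[OF c] by simp
    show ?thesis unfolding G_def
      using Ln_wq(1)[OF c] integrable_NN2_lnQ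
      by (simp add: r integral_NN2_lnQ NN2.prob_space)
  qed
  have ae: "AE p in (NN \<Otimes>\<^sub>M NN). ln ((cmod (A * zeta p + B * cnj (zeta p)))\<^sup>2) = G p"
    using AE_NN2_nz
  proof (rule AE_mp, intro AE_I2 impI)
    fix p :: "real \<times> real" assume "p \<noteq> (0, 0)"
    then have z: "zeta p \<noteq> 0" by (rule zeta_nz)
    have cw: "cmod (c * wq p) < 1"
      using norm_wq_le[of p] c by (simp add: norm_mult) (smt (verit) mult_left_le norm_ge_zero)
    then have nz1: "1 + c * wq p \<noteq> 0"
      by (metis add.inverse_unique norm_minus_cancel norm_one order_less_irrefl)
    have X: "A * zeta p + B * cnj (zeta p) = A * zeta p * (1 + c * wq p)"
      using z A0 by (simp add: c_def wq_def' field_simps)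
    have "(cmod (A * zeta p + B * cnj (zeta p)))\<^sup>2 = (cmod A)\<^sup>2 * Qf p * (cmod (1 + c * wq p))\<^sup>2"
      unfolding X by (simp add: norm_mult power_mult_distrib norm_zeta_sq)
    moreover have "Qf p > 0" using z norm_zeta_sq[of p] by (metis zero_less_power2 norm_eq_zero zero_less_norm_iff)
    moreover have "(cmod A)\<^sup>2 > 0" using A0 by simp
    moreover have "(cmod (1 + c * wq p))\<^sup>2 > 0" using nz1 by simp
    ultimately have "ln ((cmod (A * zeta p + B * cnj (zeta p)))\<^sup>2) = ln ((cmod A)\<^sup>2) + ln (Qf p) + ln ((cmod (1 + c * wq p))\<^sup>2)"
      by (simp add: ln_mult)
    also have "ln ((cmod (1 + c * wq p))\<^sup>2) = 2 * Re (ln (1 + c * wq p))"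
      using nz1 by (simp add: ln_realpow Re_Ln)
    finally show "ln ((cmod (A * zeta p + B * cnj (zeta p)))\<^sup>2) = G p" unfolding G_def .
  qed
  have m: "(\<lambda>p. ln ((cmod (A * zeta p + B * cnj (zeta p)))\<^sup>2)) \<in> borel_measurable (NN \<Otimes>\<^sub>M NN)"
    unfolding cnj_zeta by measurable
  show "integrable (NN \<Otimes>\<^sub>M NN) (\<lambda>p. ln ((cmod (A * zeta p + B * cnj (zeta p)))\<^sup>2))"
    using integrable_cong_AE[OF m _ ae] intG by (auto intro: borel_measurable_integrable)
  show "(\<integral>p. ln ((cmod (A * zeta p + B * cnj (zeta p)))\<^sup>2) \<partial>(NN \<Otimes>\<^sub>M NN))
           = ln ((cmod A)\<^sup>2) + (LINT \<rho>:{0<..}|lborel. exp (- \<rho>) * ln \<rho>)"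
    using integral_cong_AE[OF m _ ae] intG intG_val by (auto intro: borel_measurable_integrable)
qed



lemma sumsq_le: "cmod (\<Sum>i\<in>UNIV. (z $ i)\<^sup>2) \<le> (\<Sum>i\<in>UNIV. (cmod (z $ i))\<^sup>2)"
  for z :: "complex^'n"
proof -
  have "cmod (\<Sum>i\<in>UNIV. (z $ i)\<^sup>2) \<le> (\<Sum>i\<in>UNIV. cmod ((z $ i)\<^sup>2))" by (rule norm_sum)
  also have "\<dots> = (\<Sum>i\<in>UNIV. (cmod (z $ i))\<^sup>2)" by (simp add: norm_power)
  finally show ?thesis .
qed

lemma notRP_strict:
  fixes z :: "complex^'n"
  assumes nr: "\<not> in_RP z"
  shows "cmod (\<Sum>i\<in>UNIV. (z $ i)\<^sup>2) < (\<Sum>i\<in>UNIV. (cmod (z $ i))\<^sup>2)"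
proof (rule ccontr)
  define S where "S = (\<Sum>i\<in>UNIV. (z $ i)\<^sup>2)"
  assume "\<not> cmod (\<Sum>i\<in>UNIV. (z $ i)\<^sup>2) < (\<Sum>i\<in>UNIV. (cmod (z $ i))\<^sup>2)"
  then have eq: "(\<Sum>i\<in>UNIV. (cmod (z $ i))\<^sup>2) = cmod S" using sumsq_le[of z] unfolding S_def by linarith
  show False
  proof (cases "S = 0")
    case True
    then have "(\<Sum>i\<in>UNIV. (cmod (z $ i))\<^sup>2) = 0" using eq by simp
    then have "\<forall>i. z $ i = 0" by (simp add: sum_nonneg_eq_0_iff)
    then have "z = 0 *s (\<chi> i. complex_of_real (0 $ i))" by (simp add: vec_eq_iff)
    then show False using nr unfolding in_RP_def by blast
  next
    case False
    define \<omega> where "\<omega> = csqrt (S / of_real (cmod S))"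
    have nS: "cmod S > 0" using False by simp
    have w2: "\<omega>\<^sup>2 = S / of_real (cmod S)" by (simp add: \<omega>_def)
    have nw: "cmod \<omega> = 1"
    proof -
      have "(cmod \<omega>)\<^sup>2 = 1" using w2 nS by (simp add: norm_power[symmetric] norm_divide)
      then show ?thesis by (simp add: power2_eq_1_iff) (smt (verit) norm_ge_zero)
    qed
    then have w0: "\<omega> \<noteq> 0" by auto
    define y where "y = (\<lambda>i. z $ i / \<omega>)"
    have sy: "(\<Sum>i\<in>UNIV. (y i)\<^sup>2) = of_real (cmod S)"
    proof -
      have "(\<Sum>i\<in>UNIV. (y i)\<^sup>2) = S / \<omega>\<^sup>2" unfolding y_def S_def by (simp add: power_divide sum_divide_distrib)
      also have "\<dots> = of_real (cmod S)" using w2 nS False w0 by (simp add: field_simps)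
      finally show ?thesis .
    qed
    have ny: "(\<Sum>i\<in>UNIV. (cmod (y i))\<^sup>2) = cmod S" using eq nw by (simp add: y_def norm_divide)
    have "(\<Sum>i\<in>UNIV. (Re (y i))\<^sup>2 - (Im (y i))\<^sup>2) = cmod S"
    proof -
      have "Re (\<Sum>i\<in>UNIV. (y i)\<^sup>2) = cmod S" using sy by simp
      then show ?thesis by (simp add: Re_sum Re_power2)
    qed
    moreover have "(\<Sum>i\<in>UNIV. (Re (y i))\<^sup>2 + (Im (y i))\<^sup>2) = cmod S" using ny by (simp add: cmod_power2)
    ultimately have "(\<Sum>i\<in>UNIV. (Im (y i))\<^sup>2) = 0"
      by (simp add: sum.distrib sum_subtractf)
    then have im: "\<forall>i. Im (y i) = 0" by (simp add: sum_nonneg_eq_0_iff)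
    have "z = \<omega> *s (\<chi> i. complex_of_real (Re (y i)))"
    proof (subst vec_eq_iff, intro allI)
      fix i
      have "y i = of_real (Re (y i))" using im by (simp add: complex_eq_iff)
      then show "z $ i = (\<omega> *s (\<chi> i. complex_of_real (Re (y i)))) $ i"
        using w0 by (simp add: y_def field_simps)
    qed
    then have "z = \<omega> *s (\<chi> i. complex_of_real ((\<chi> i. Re (y i)) $ i))" by simp
    then show False using nr unfolding in_RP_def by blast
  qed
qed


lemma lin2_AB: "lin2 u v p = ((u - \<i> * v) * zeta p + (u + \<i> * v) * cnj (zeta p)) / 2"
  by (simp add: lin2_def complex_eq_iff algebra_simps)

lemma AB_nz:
  assumes "cmod A \<noteq> cmod B" "p \<noteq> (0, 0)"
  shows "A * zeta p + B * cnj (zeta p) \<noteq> 0"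
proof
  assume "A * zeta p + B * cnj (zeta p) = 0"
  then have "A * zeta p = - (B * cnj (zeta p))" by (simp add: eq_neg_iff_add_eq_0)
  then have "cmod A * cmod (zeta p) = cmod B * cmod (zeta p)" by (metis norm_minus_cancel norm_mult complex_mod_cnj)
  moreover have "cmod (zeta p) \<noteq> 0" using zeta_nz[OF assms(2)] by simp
  ultimately show False using assms(1) by simp
qed

lemma core2D_max:
  fixes A B :: complex
  assumes AB: "cmod A \<noteq> cmod B"
  shows "integrable (NN \<Otimes>\<^sub>M NN) (\<lambda>p. ln ((cmod (A * zeta p + B * cnj (zeta p)))\<^sup>2))
     \<and> (\<integral>p. ln ((cmod (A * zeta p + B * cnj (zeta p)))\<^sup>2) \<partial>(NN \<Otimes>\<^sub>M NN))
           = ln (max ((cmod A)\<^sup>2) ((cmod B)\<^sup>2)) + (LINT \<rho>:{0<..}|lborel. exp (- \<rho>) * ln \<rho>)"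
proof (cases "cmod B < cmod A")
  case True
  have "max ((cmod A)\<^sup>2) ((cmod B)\<^sup>2) = (cmod A)\<^sup>2" using True by (simp add: power_mono max_def)
  then show ?thesis using core2D[OF True] by simp
next
  case False
  then have lt: "cmod (cnj A) < cmod (cnj B)" using AB by simp
  have eq: "cmod (A * zeta p + B * cnj (zeta p)) = cmod (cnj B * zeta p + cnj A * cnj (zeta p))" for p
    by (metis complex_mod_cnj complex_cnj_add complex_cnj_mult complex_cnj_cnj add.commute)
  have "max ((cmod A)\<^sup>2) ((cmod B)\<^sup>2) = (cmod B)\<^sup>2" using False by (simp add: power_mono max_def)
  then show ?thesis using core2D[OF lt] unfolding eq by simp
qed

theorem proposition4p1:
  fixes z :: "complex ^ 'n"
  assumes "CARD('n) \<ge> 2"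
    and "z \<noteq> 0"
    and "\<not> in_RP z"
  shows "E_CP z = ln (real CARD('n) / 4)
           + (LINT \<rho>:{0<..}|lborel. exp (- \<rho>) * ln \<rho>)
           + ln (1 + sqrt (1 - (tau_norm z)\<^sup>2))"
proof -
  define C0 :: real where "C0 = (LINT \<rho>:{0<..}|lborel. exp (- \<rho>) * ln (\<rho>::real))"
  define n where "n = real CARD('n)"
  have n: "n > 0" by (simp add: n_def)
  obtain u v where E: "E_CP z = (\<integral>p. ln (n * (cmod (lin2 u v p))\<^sup>2 / (norm z)\<^sup>2) \<partial>(NN \<Otimes>\<^sub>M NN))"
    and nu: "(cmod u)\<^sup>2 + (cmod v)\<^sup>2 = (norm z)\<^sup>2" and qu: "u\<^sup>2 + v\<^sup>2 = (\<Sum>i\<in>UNIV. (z $ i)\<^sup>2)"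
    using E_CP_transfer[of z] unfolding n_def by blast
  define Z where "Z = (norm z)\<^sup>2"
  define P where "P = cmod (\<Sum>i\<in>UNIV. (z $ i)\<^sup>2)"
  have Z: "Z > 0" using assms(2) by (simp add: Z_def)
  have PZ: "P < Z" using notRP_strict[OF assms(3)] by (simp add: P_def Z_def norm_cvec_sq)
  have P0: "P \<ge> 0" by (simp add: P_def)
  define A where "A = u - \<i> * v"
  define B where "B = u + \<i> * v"
  define a where "a = (cmod A)\<^sup>2"
  define b where "b = (cmod B)\<^sup>2"
  have ab_sum: "a + b = 2 * Z"
    using nu unfolding a_def b_def A_def B_def Z_def[symmetric] cmod_power2
    by (simp add: power2_eq_square algebra_simps)
  have ab_prod: "a * b = P\<^sup>2"
  proof -
    have "A * B = (\<Sum>i\<in>UNIV. (z $ i)\<^sup>2)" unfolding A_def B_def qu[symmetric]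
      by (simp add: algebra_simps power2_eq_square)
    then have "cmod A * cmod B = P" unfolding P_def by (metis norm_mult)
    then show ?thesis unfolding a_def b_def by (metis power_mult_distrib)
  qed
  have diff: "(a - b)\<^sup>2 = 4 * (Z\<^sup>2 - P\<^sup>2)"
  proof -
    have "(a - b)\<^sup>2 = (a + b)\<^sup>2 - 4 * (a * b)" by (simp add: power2_eq_square algebra_simps)
    then show ?thesis using ab_sum ab_prod by (simp add: power2_eq_square algebra_simps)
  qed
  have ZP: "Z\<^sup>2 - P\<^sup>2 > 0" using PZ P0 by (simp add: power_strict_mono)
  have ab_ne: "a \<noteq> b" using diff ZP by auto
  then have AB: "cmod A \<noteq> cmod B" unfolding a_def b_def by auto
  have maxab: "max a b = Z + sqrt (Z\<^sup>2 - P\<^sup>2)"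
  proof -
    have "\<bar>a - b\<bar> = sqrt ((a - b)\<^sup>2)" by simp
    also have "\<dots> = sqrt 4 * sqrt (Z\<^sup>2 - P\<^sup>2)" unfolding diff by (rule real_sqrt_mult)
    also have "sqrt 4 = (2::real)" by (simp add: real_sqrt_eq_iff)
    finally have "\<bar>a - b\<bar> = 2 * sqrt (Z\<^sup>2 - P\<^sup>2)" .
    moreover have "max a b = (a + b + \<bar>a - b\<bar>) / 2" by (simp add: max_def abs_if)
    ultimately show ?thesis using ab_sum by simp
  qed
  have core: "integrable (NN \<Otimes>\<^sub>M NN) (\<lambda>p. ln ((cmod (A * zeta p + B * cnj (zeta p)))\<^sup>2))"
    "(\<integral>p. ln ((cmod (A * zeta p + B * cnj (zeta p)))\<^sup>2) \<partial>(NN \<Otimes>\<^sub>M NN)) = ln (max a b) + C0"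
    using core2D_max[OF AB] unfolding a_def b_def C0_def by auto
  have ae: "AE p in (NN \<Otimes>\<^sub>M NN). ln (n * (cmod (lin2 u v p))\<^sup>2 / (norm z)\<^sup>2)
      = ln n - ln 4 - ln Z + ln ((cmod (A * zeta p + B * cnj (zeta p)))\<^sup>2)"
    using AE_NN2_nz
  proof (rule AE_mp, intro AE_I2 impI)
    fix p :: "real \<times> real" assume p: "p \<noteq> (0, 0)"
    define X where "X = (cmod (A * zeta p + B * cnj (zeta p)))\<^sup>2"
    have X: "X > 0" using AB_nz[OF AB p] by (simp add: X_def)
    have lAB: "lin2 u v p = (A * zeta p + B * cnj (zeta p)) / 2"
      unfolding A_def B_def by (rule lin2_AB)
    have e1: "n * (cmod (lin2 u v p))\<^sup>2 / (norm z)\<^sup>2 = n * X / (4 * Z)"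
      unfolding lAB X_def Z_def by (simp add: norm_divide power_divide)
    have e2: "ln (n * X / (4 * Z)) = ln n + ln X - (ln 4 + ln Z)"
      using n X Z by (simp add: ln_div ln_mult)
    have "ln (n * (cmod (lin2 u v p))\<^sup>2 / (norm z)\<^sup>2) = ln n + ln X - (ln 4 + ln Z)" using e1 e2 by simp
    then show "ln (n * (cmod (lin2 u v p))\<^sup>2 / (norm z)\<^sup>2) = ln n - ln 4 - ln Z + ln ((cmod (A * zeta p + B * cnj (zeta p)))\<^sup>2)"
      by (simp add: X_def)
  qed
  have m: "(\<lambda>p. ln (n * (cmod (lin2 u v p))\<^sup>2 / (norm z)\<^sup>2)) \<in> borel_measurable (NN \<Otimes>\<^sub>M NN)" by measurable
  have "E_CP z = (\<integral>p. ln n - ln 4 - ln Z + ln ((cmod (A * zeta p + B * cnj (zeta p)))\<^sup>2) \<partial>(NN \<Otimes>\<^sub>M NN))"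
    unfolding E by (rule integral_cong_AE[OF m _ ae]) (use core(1) in \<open>auto intro: borel_measurable_integrable\<close>)
  also have "\<dots> = ln n - ln 4 - ln Z + (ln (max a b) + C0)"
    using core by (simp add: NN2.prob_space)
  finally have E2: "E_CP z = ln n - ln 4 - ln Z + ln (max a b) + C0" by simp
  have tau: "tau_norm z = P / Z" by (simp add: tau_norm_def P_def Z_def)
  have "1 + sqrt (1 - (tau_norm z)\<^sup>2) = max a b / Z"
  proof -
    have "1 - (P / Z)\<^sup>2 = (Z\<^sup>2 - P\<^sup>2) / Z\<^sup>2" using Z by (simp add: field_simps power2_eq_square)
    then have "sqrt (1 - (P / Z)\<^sup>2) = sqrt (Z\<^sup>2 - P\<^sup>2) / Z" using Z by (simp add: real_sqrt_divide)
    then show ?thesis unfolding tau maxab using Z by (simp add: field_simps)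
  qed
  moreover have "max a b > 0" using maxab Z ZP by (smt (verit) real_sqrt_ge_zero)
  ultimately have "ln (1 + sqrt (1 - (tau_norm z)\<^sup>2)) = ln (max a b) - ln Z" using Z by (simp add: ln_div)
  moreover have "ln (n / 4) = ln n - ln 4" using n by (simp add: ln_div)
  ultimately show ?thesis unfolding E2 C0_def[symmetric] n_def[symmetric] by simp
qed


end
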